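(* Let $\mathbb T=(\mathbb C^* )^d$ and let $D$ be a $\mathbb T$-equivariant, $\mathbb Z/2$-graded coherent sheaf on a point (i.e. a $\mathbb Z/2$-graded finite-dimensional $\mathbb T$-representation). For each $i\ge1$ let $D_i=D$ with the trivial $S_i$-equivariant structure. Let $\mathfrak A=\{A_1,\dots,A_l\}$ be a set partition of $[n]$ and $S_{\mathfrak A}\subseteq S_n$ the subgroup preserving $\mathfrak A$. If $[D]\neq0$ in $K_{\mathbb T}(\mathrm{pt})$, then $[D_{A_1}\otimes\cdots\otimes D_{A_l}]$ is a unit in $K_{\mathbb T\times S_{\mathfrak A}}(\mathrm{pt})_{\mathrm{loc}}$.
   Context: $K_{\mathbb T}(\mathrm{pt})_{\mathrm{loc}}$ is the fraction field of $K_{\mathbb T}(\mathrm{pt})\cong\mathbb Z[t_1^{\pm1},\dots,t_d^{\pm1}]$, and for a $K_{\mathbb T}(\mathrm{pt})$-module $M$, $M_{\mathrm{loc}}=M\otimes_{K_{\mathbb T}(\mathrm{pt})}K_{\mathbb T}(\mathrm{pt})_{\mathrm{loc}}$. For a $\mathbb Z/2$-graded object $E$, $[E]=[E_{\mathrm{even}}]-[E_{\mathrm{odd}}]$. Here $D_{A_j}$ is a copy of $D_{|A_j|}=D$ indexed by $A_j$, and $D_{A_1}\otimes\cdots\otimes D_{A_l}$ carries the natural $S_{\mathfrak A}$-equivariant structure in which elements of $S_{\mathfrak A}$ permute the tensor factors according to their action on the blocks of $\mathfrak A$ (via the graded-commutativity isomorphism of the tensor product, with Koszul signs), acting trivially within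 blocks. *)

theory Defs
  imports Complex_Main "HOL-Library.Poly_Mapping" "HOL-Library.Disjoint_Sets"
    "HOL-Library.FuncSet" "HOL-Combinatorics.Permutations"
begin

text \<open>Laurent polynomials in t_1..t_d with complex coefficients: finitely supported
  functions from exponent vectors (nat =>0 int, Poly_Mapping.keys below d) to complex numbers.
  The monomial t^w is Poly_Mapping.single w 1.\<close>

type_synonym laur = "(nat \<Rightarrow>\<^sub>0 int) \<Rightarrow>\<^sub>0 complex"

text \<open>K_T(pt) = Z[t_1^{+-1},...,t_d^{+-1}] inside laur.\<close>
definition K_T :: "nat \<Rightarrow> laur set" where
  "K_T d = {s. (\<forall>e\<in>Poly_Mapping.keys s. Poly_Mapping.keys e \<subseteq> {..<d}) \<and> (\<forall>e. Poly_Mapping.lookup s e \<in> \<int>)}"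

definition Sym_part :: "nat \<Rightarrow> nat set set \<Rightarrow> (nat \<Rightarrow> nat) set" where
  "Sym_part n A = {\<sigma>. \<sigma> permutes {1..n} \<and> (\<forall>B\<in>A. \<sigma> ` B \<in> A)}"

text \<open>A Z/2-graded finite-dimensional (T x G)-representation, given on a finite basis I
  consisting of T-weight vectors: wt i is the T-weight of basis vector i, par i its parity
  (True = odd), and rho g i j the matrix entries of g (coefficient of e_i in g e_j).\<close>
definition graded_rep ::
  "nat \<Rightarrow> (nat \<Rightarrow> nat) set \<Rightarrow> 'i set \<Rightarrow> ((nat \<Rightarrow> nat) \<Rightarrow> 'i \<Rightarrow> 'i \<Rightarrow> complex)
    \<Rightarrow> ('i \<Rightarrow> (nat \<Rightarrow>\<^sub>0 int)) \<Rightarrow> ('i \<Rightarrow> bool) \<Rightarrow> bool" where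
  "graded_rep d G I \<rho> wt par \<longleftrightarrow>
     finite I \<and> (\<forall>i\<in>I. Poly_Mapping.keys (wt i) \<subseteq> {..<d}) \<and>
     (\<forall>i\<in>I. \<forall>j\<in>I. \<rho> id i j = (if i = j then 1 else 0)) \<and>
     (\<forall>g\<in>G. \<forall>h\<in>G. \<forall>i\<in>I. \<forall>j\<in>I. \<rho> (g \<circ> h) i j = (\<Sum>k\<in>I. \<rho> g i k * \<rho> h k j)) \<and>
     (\<forall>g\<in>G. \<forall>i\<in>I. \<forall>j\<in>I. \<rho> g i j \<noteq> 0 \<longrightarrow> wt i = wt j \<and> par i = par j)"

text \<open>The class [E] = [E_even] - [E_odd] in K_{T x G}(pt), represented by its (super)character
  G -> Z[t^{+-1}] (x) C; characters determine classes.\<close>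
definition schar ::
  "'i set \<Rightarrow> ((nat \<Rightarrow> nat) \<Rightarrow> 'i \<Rightarrow> 'i \<Rightarrow> complex) \<Rightarrow> ('i \<Rightarrow> (nat \<Rightarrow>\<^sub>0 int))
     \<Rightarrow> ('i \<Rightarrow> bool) \<Rightarrow> (nat \<Rightarrow> nat) \<Rightarrow> laur" where
  "schar I \<rho> wt par g = (\<Sum>i\<in>I. Poly_Mapping.single (wt i) ((if par i then -1 else 1) * \<rho> g i i))"

text \<open>K_{T x G}(pt) as the ring of virtual (super)characters.\<close>
definition K_equiv :: "nat \<Rightarrow> (nat \<Rightarrow> nat) set \<Rightarrow> ((nat \<Rightarrow> nat) \<Rightarrow> laur) set" where
  "K_equiv d G = {\<chi>. \<exists>(m::nat) \<rho> wt par (m'::nat) \<rho>' wt' par'.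
      graded_rep d G {..<m} \<rho> wt par \<and> graded_rep d G {..<m'} \<rho>' wt' par' \<and>
      \<chi> = (\<lambda>g. schar {..<m} \<rho> wt par g - schar {..<m'} \<rho>' wt' par' g)}"

text \<open>x (an element of K_{T x G}(pt), which is free over K_T(pt)) is a unit in
  K_{T x G}(pt)_loc = K_{T x G}(pt) (x)_{K_T(pt)} Frac(K_T(pt)) iff x * y = s for some
  y in K_{T x G}(pt) and some nonzero s in K_T(pt).\<close>
definition unit_loc :: "nat \<Rightarrow> (nat \<Rightarrow> nat) set \<Rightarrow> ((nat \<Rightarrow> nat) \<Rightarrow> laur) \<Rightarrow> bool" where
  "unit_loc d G x \<longleftrightarrow>
     (\<exists>y\<in>K_equiv d G. \<exists>s\<in>K_T d. s \<noteq> 0 \<and> (\<forall>g\<in>G. x g * y g = s))"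

text \<open>D is given by a weight basis: a list of (T-weight, parity) pairs (True = odd).\<close>
definition classD :: "((nat \<Rightarrow>\<^sub>0 int) \<times> bool) list \<Rightarrow> laur" where
  "classD ds = (\<Sum>(w, p)\<leftarrow>ds. Poly_Mapping.single w (if p then -1 else 1))"

text \<open>The tensor product D_{A_1} (x) ... (x) D_{A_l}: basis vectors are tensor products of
  basis vectors of D, one for each block, i.e. functions f : A -> {..<length ds}.
  The tensor factors are ordered by the minima of the blocks.\<close>
definition tens_basis :: "nat set set \<Rightarrow> ((nat \<Rightarrow>\<^sub>0 int) \<times> bool) list \<Rightarrow> (nat set \<Rightarrow> nat) set" where
  "tens_basis A ds = PiE A (\<lambda>_. {..<length ds})"

definition tens_wt :: "nat set set \<Rightarrow> ((nat \<Rightarrow>\<^sub>0 int) \<times> bool) list \<Rightarrow> (nat set \<Rightarrow> nat) \<Rightarrow> (nat \<Rightarrow>\<^sub>0 int)" where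
  "tens_wt A ds f = (\<Sum>B\<in>A. fst (ds ! f B))"

definition tens_par :: "nat set set \<Rightarrow> ((nat \<Rightarrow>\<^sub>0 int) \<times> bool) list \<Rightarrow> (nat set \<Rightarrow> nat) \<Rightarrow> bool" where
  "tens_par A ds f = odd (card {B\<in>A. snd (ds ! f B)})"

text \<open>Koszul sign of sigma moving the factor in block B to block sigma ` B.\<close>
definition koszul :: "nat set set \<Rightarrow> ((nat \<Rightarrow>\<^sub>0 int) \<times> bool) list \<Rightarrow> (nat \<Rightarrow> nat) \<Rightarrow> (nat set \<Rightarrow> nat) \<Rightarrow> complex" where
  "koszul A ds \<sigma> f = (-1) ^ card {(B, B'). B \<in> A \<and> B' \<in> A \<and> Min B < Min B' \<and>
       Min (\<sigma> ` B') < Min (\<sigma> ` B) \<and> snd (ds ! f B) \<and> snd (ds ! f B')}"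

text \<open>sigma e_f = koszul * e_{f'} where f' (sigma ` B) = f B.\<close>
definition tens_rho :: "nat \<Rightarrow> nat set set \<Rightarrow> ((nat \<Rightarrow>\<^sub>0 int) \<times> bool) list \<Rightarrow>
    (nat \<Rightarrow> nat) \<Rightarrow> (nat set \<Rightarrow> nat) \<Rightarrow> (nat set \<Rightarrow> nat) \<Rightarrow> complex" where
  "tens_rho n A ds \<sigma> g f =
     (if g = (\<lambda>B\<in>A. f (inv_into {1..n} \<sigma> ` B)) then koszul A ds \<sigma> f else 0)"

definition tensor_class :: "nat \<Rightarrow> nat set set \<Rightarrow> ((nat \<Rightarrow>\<^sub>0 int) \<times> bool) list \<Rightarrow> (nat \<Rightarrow> nat) \<Rightarrow> laur" where
  "tensor_class n A ds =
     schar (tens_basis A ds) (tens_rho n A ds) (tens_wt A ds) (tens_par A ds)"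

end

theory Submission
  imports Defs
begin

definition isc :: "nat \<Rightarrow> (nat \<Rightarrow> nat) set \<Rightarrow> ((nat \<Rightarrow> nat) \<Rightarrow> laur) \<Rightarrow> bool" where
  "isc d G \<chi> \<longleftrightarrow> (\<exists>(m::nat) \<rho> wt par. graded_rep d G {..<m} \<rho> wt par \<and> \<chi> = schar {..<m} \<rho> wt par)"

lemma gr_fin: "graded_rep d G I \<rho> wt par \<Longrightarrow> finite I"
  by (simp add: graded_rep_def)
lemma gr_keys: "graded_rep d G I \<rho> wt par \<Longrightarrow> i \<in> I \<Longrightarrow> Poly_Mapping.keys (wt i) \<subseteq> {..<d}"
  by (simp add: graded_rep_def)
lemma gr_id: "graded_rep d G I \<rho> wt par \<Longrightarrow> i \<in> I \<Longrightarrow> j \<in> I \<Longrightarrow> \<rho> id i j = (if i = j then 1 else 0)"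
  by (simp add: graded_rep_def)
lemma gr_mult: "graded_rep d G I \<rho> wt par \<Longrightarrow> g \<in> G \<Longrightarrow> h \<in> G \<Longrightarrow> i \<in> I \<Longrightarrow> j \<in> I \<Longrightarrow>
   \<rho> (g \<circ> h) i j = (\<Sum>k\<in>I. \<rho> g i k * \<rho> h k j)"
  by (simp add: graded_rep_def)
lemma gr_wt: "graded_rep d G I \<rho> wt par \<Longrightarrow> g \<in> G \<Longrightarrow> i \<in> I \<Longrightarrow> j \<in> I \<Longrightarrow> \<rho> g i j \<noteq> 0 \<Longrightarrow> wt i = wt j \<and> par i = par j"
  by (simp add: graded_rep_def)

lemma isc_transport:
  fixes I :: "'i set"
  assumes R: "graded_rep d G I \<rho> wt par"
  shows "isc d G (schar I \<rho> wt par)"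
proof -
  have fin: "finite I" using R by (simp add: graded_rep_def)
  obtain e where e: "bij_betw e {..<card I} I"
    using ex_bij_betw_nat_finite[OF fin] by (auto simp: lessThan_atLeast0)
  have inj: "\<And>i j. i < card I \<Longrightarrow> j < card I \<Longrightarrow> (e i = e j) = (i = j)"
    using e by (auto simp: bij_betw_def inj_on_def)
  have mem: "\<And>i. i < card I \<Longrightarrow> e i \<in> I" using e bij_betwE by blast
  have sumI: "\<And>h. (\<Sum>k<card I. h (e k)) = (\<Sum>k\<in>I. h k)"
    using sum.reindex_bij_betw[OF e] by blast
  define \<rho>' where "\<rho>' = (\<lambda>g i j. \<rho> g (e i) (e j))"
  have "graded_rep d G {..<card I} \<rho>' (wt \<circ> e) (par \<circ> e)"
    unfolding graded_rep_def
  proof (intro conjI ballI)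
    fix i assume "i \<in> {..<card I}"
    then show "Poly_Mapping.keys ((wt \<circ> e) i) \<subseteq> {..<d}" using R mem by (auto simp: graded_rep_def)
  next
    fix i j assume "i \<in> {..<card I}" "j \<in> {..<card I}"
    then show "\<rho>' id i j = (if i = j then 1 else 0)" using R mem inj
      by (auto simp: graded_rep_def \<rho>'_def)
  next
    fix g h i j assume gh: "g \<in> G" "h \<in> G" and ij: "i \<in> {..<card I}" "j \<in> {..<card I}"
    have "\<rho>' (g \<circ> h) i j = (\<Sum>k\<in>I. \<rho> g (e i) k * \<rho> h k (e j))"
      using R gh ij mem by (auto simp: graded_rep_def \<rho>'_def)
    also have "\<dots> = (\<Sum>k<card I. \<rho>' g i k * \<rho>' h k j)"
      using sumI[of "\<lambda>k. \<rho> g (e i) k * \<rho> h k (e j)"] by (simp add: \<rho>'_def)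
    finally show "\<rho>' (g \<circ> h) i j = (\<Sum>k\<in>{..<card I}. \<rho>' g i k * \<rho>' h k j)" by simp
  next
    fix g i j assume "g \<in> G" "i \<in> {..<card I}" "j \<in> {..<card I}"
    then show "\<rho>' g i j \<noteq> 0 \<longrightarrow> (wt \<circ> e) i = (wt \<circ> e) j \<and> (par \<circ> e) i = (par \<circ> e) j"
      using R mem by (auto simp: graded_rep_def \<rho>'_def)
  qed simp
  moreover have "schar {..<card I} \<rho>' (wt \<circ> e) (par \<circ> e) = schar I \<rho> wt par"
    unfolding schar_def \<rho>'_def by (rule ext) (simp add: sumI[where h = "\<lambda>k. Poly_Mapping.single (wt k) ((if par k then -1 else 1) * \<rho> _ k k)"])
  ultimately show ?thesis unfolding isc_def by metis
qed

lemma isc_mult: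
  assumes "isc d G \<chi>1" "isc d G \<chi>2"
  shows "isc d G (\<lambda>g. \<chi>1 g * \<chi>2 g)"
proof -
  obtain m1 :: nat and \<rho>1 wt1 par1 where R1: "graded_rep d G {..<m1} \<rho>1 wt1 par1" and c1: "\<chi>1 = schar {..<m1} \<rho>1 wt1 par1"
    using assms(1) unfolding isc_def by blast
  obtain m2 :: nat and \<rho>2 wt2 par2 where R2: "graded_rep d G {..<m2} \<rho>2 wt2 par2" and c2: "\<chi>2 = schar {..<m2} \<rho>2 wt2 par2"
    using assms(2) unfolding isc_def by blast
  define I where "I = {..<m1} \<times> {..<m2}"
  define \<rho> where "\<rho> = (\<lambda>g (p::nat\<times>nat) (q::nat\<times>nat). \<rho>1 g (fst p) (fst q) * \<rho>2 g (snd p) (snd q))"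
  define wt where "wt = (\<lambda>p::nat\<times>nat. wt1 (fst p) + wt2 (snd p))"
  define par where "par = (\<lambda>p::nat\<times>nat. par1 (fst p) \<noteq> par2 (snd p))"
  have prodsum: "\<And>(f1::nat\<Rightarrow>complex) f2. (\<Sum>k<m1. f1 k) * (\<Sum>k<m2. f2 k) = (\<Sum>p\<in>I. f1 (fst p) * f2 (snd p))"
    unfolding I_def by (simp add: sum_product sum.cartesian_product case_prod_beta)
  have "graded_rep d G I \<rho> wt par"
    unfolding graded_rep_def
  proof (intro conjI ballI)
    show "finite I" by (simp add: I_def)
  next
    fix i assume "i \<in> I"
    then have "Poly_Mapping.keys (wt1 (fst i)) \<subseteq> {..<d}" "Poly_Mapping.keys (wt2 (snd i)) \<subseteq> {..<d}"
      using R1 R2 by (auto simp: graded_rep_def I_def)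
    then show "Poly_Mapping.keys (wt i) \<subseteq> {..<d}" using keys_add[of "wt1 (fst i)" "wt2 (snd i)"]
      unfolding wt_def by blast
  next
    fix i j assume "i \<in> I" "j \<in> I"
    then show "\<rho> id i j = (if i = j then 1 else 0)" using R1 R2
      by (auto simp: graded_rep_def \<rho>_def I_def prod_eq_iff)
  next
    fix g h i j assume gh: "g \<in> G" "h \<in> G" and ij: "i \<in> I" "j \<in> I"
    have "\<rho> (g \<circ> h) i j = (\<Sum>k<m1. \<rho>1 g (fst i) k * \<rho>1 h k (fst j)) * (\<Sum>k<m2. \<rho>2 g (snd i) k * \<rho>2 h k (snd j))"
      using R1 R2 gh ij by (auto simp: graded_rep_def \<rho>_def I_def)
    also have "\<dots> = (\<Sum>k\<in>I. \<rho> g i k * \<rho> h k j)"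
      unfolding prodsum by (rule sum.cong) (auto simp: \<rho>_def algebra_simps)
    finally show "\<rho> (g \<circ> h) i j = (\<Sum>k\<in>I. \<rho> g i k * \<rho> h k j)" .
  next
    fix g i j assume "g \<in> G" "i \<in> I" "j \<in> I"
    then show "\<rho> g i j \<noteq> 0 \<longrightarrow> wt i = wt j \<and> par i = par j"
      using R1 R2 by (auto simp: graded_rep_def \<rho>_def wt_def par_def I_def)
  qed
  moreover have "schar I \<rho> wt par = (\<lambda>g. \<chi>1 g * \<chi>2 g)"
  proof (rule ext)
    fix g
    have "\<chi>1 g * \<chi>2 g = (\<Sum>p\<in>I. Poly_Mapping.single (wt1 (fst p)) ((if par1 (fst p) then -1 else 1) * \<rho>1 g (fst p) (fst p))
        * Poly_Mapping.single (wt2 (snd p)) ((if par2 (snd p) then -1 else 1) * \<rho>2 g (snd p) (snd p)))"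
      unfolding c1 c2 schar_def I_def by (simp add: sum_product sum.cartesian_product case_prod_beta)
    also have "\<dots> = schar I \<rho> wt par g"
      unfolding schar_def by (rule sum.cong) (auto simp: mult_single \<rho>_def wt_def par_def)
    finally show "schar I \<rho> wt par g = \<chi>1 g * \<chi>2 g" by simp
  qed
  ultimately show ?thesis using isc_transport by metis
qed

lemma isc_neg:
  assumes "isc d G \<chi>"
  shows "isc d G (\<lambda>g. - \<chi> g)"
proof -
  obtain m :: nat and \<rho> wt par where R: "graded_rep d G {..<m} \<rho> wt par" and c: "\<chi> = schar {..<m} \<rho> wt par"
    using assms unfolding isc_def by blast
  have "graded_rep d G {..<m} \<rho> wt (\<lambda>i. \<not> par i)" using R by (auto simp: graded_rep_def)
  moreover have "schar {..<m} \<rho> wt (\<lambda>i. \<not> par i) = (\<lambda>g. - \<chi> g)"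
  proof (rule ext)
    fix g
    have "schar {..<m} \<rho> wt (\<lambda>i. \<not> par i) g = (\<Sum>i<m. - Poly_Mapping.single (wt i) ((if par i then -1 else 1) * \<rho> g i i))"
      unfolding schar_def by (rule sum.cong) (auto simp flip: single_uminus)
    also have "\<dots> = - \<chi> g" unfolding c schar_def by (rule sum_negf)
    finally show "schar {..<m} \<rho> wt (\<lambda>i. \<not> par i) g = - \<chi> g" .
  qed
  ultimately show ?thesis unfolding isc_def by metis
qed

lemma isc_add:
  assumes "isc d G \<chi>1" "isc d G \<chi>2"
  shows "isc d G (\<lambda>g. \<chi>1 g + \<chi>2 g)"
proof -
  obtain m1 :: nat and \<rho>1 wt1 par1 where R1: "graded_rep d G {..<m1} \<rho>1 wt1 par1" and c1: "\<chi>1 = schar {..<m1} \<rho>1 wt1 par1"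
    using assms(1) unfolding isc_def by blast
  obtain m2 :: nat and \<rho>2 wt2 par2 where R2: "graded_rep d G {..<m2} \<rho>2 wt2 par2" and c2: "\<chi>2 = schar {..<m2} \<rho>2 wt2 par2"
    using assms(2) unfolding isc_def by blast
  define I where "I = {..<m1} <+> {..<m2}"
  define \<rho> where "\<rho> = (\<lambda>g (p::nat+nat) (q::nat+nat). case p of Inl i \<Rightarrow> (case q of Inl j \<Rightarrow> \<rho>1 g i j | Inr j \<Rightarrow> 0)
       | Inr i \<Rightarrow> (case q of Inl j \<Rightarrow> 0 | Inr j \<Rightarrow> \<rho>2 g i j))"
  define wt where "wt = case_sum wt1 wt2"
  define par where "par = case_sum par1 par2"
  have sI: "\<And>f. sum f I = (\<Sum>k<m1. f (Inl k)) + (\<Sum>k<m2. f (Inr k))"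
    unfolding I_def by (simp add: sum.Plus)
  have "graded_rep d G I \<rho> wt par"
    unfolding graded_rep_def
  proof (intro conjI ballI)
    show "finite I" by (simp add: I_def)
  next
    fix i assume i: "i \<in> I"
    show "Poly_Mapping.keys (wt i) \<subseteq> {..<d}"
    proof (cases i)
      case (Inl a)
      with i have "a < m1" by (auto simp: I_def)
      then show ?thesis using Inl gr_keys[OF R1, of a] by (simp add: wt_def)
    next
      case (Inr a)
      with i have "a < m2" by (auto simp: I_def)
      then show ?thesis using Inr gr_keys[OF R2, of a] by (simp add: wt_def)
    qed
  next
    fix i j assume "i \<in> I" "j \<in> I"
    then show "\<rho> id i j = (if i = j then 1 else 0)"
      by (cases i; cases j) (auto simp: \<rho>_def I_def gr_id[OF R1] gr_id[OF R2])
  next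
    fix g h i j assume gh: "g \<in> G" "h \<in> G" and ij: "i \<in> I" "j \<in> I"
    then show "\<rho> (g \<circ> h) i j = (\<Sum>k\<in>I. \<rho> g i k * \<rho> h k j)"
      unfolding sI by (cases i; cases j) (auto simp: \<rho>_def I_def gr_mult[OF R1] gr_mult[OF R2])
  next
    fix g i j assume "g \<in> G" "i \<in> I" "j \<in> I"
    then show "\<rho> g i j \<noteq> 0 \<longrightarrow> wt i = wt j \<and> par i = par j"
      by (cases i; cases j) (auto simp: \<rho>_def wt_def par_def I_def dest: gr_wt[OF R1] gr_wt[OF R2])
  qed
  moreover have "schar I \<rho> wt par = (\<lambda>g. \<chi>1 g + \<chi>2 g)"
    unfolding c1 c2 schar_def sI by (auto simp: \<rho>_def wt_def par_def)
  ultimately show ?thesis using isc_transport by metis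
qed

lemma sum_single_KT:
  assumes "finite I" "\<And>i. i \<in> I \<Longrightarrow> Poly_Mapping.keys (w i) \<subseteq> {..<d}" "\<And>i. i \<in> I \<Longrightarrow> a i \<in> \<int>"
  shows "(\<Sum>i\<in>I. Poly_Mapping.single (w i) (a i)) \<in> K_T d"
proof -
  have "\<forall>e\<in>Poly_Mapping.keys (\<Sum>i\<in>I. Poly_Mapping.single (w i) (a i)). Poly_Mapping.keys e \<subseteq> {..<d}"
  proof
    fix e assume "e \<in> Poly_Mapping.keys (\<Sum>i\<in>I. Poly_Mapping.single (w i) (a i))"
    then obtain i where i: "i \<in> I" "e \<in> Poly_Mapping.keys (Poly_Mapping.single (w i) (a i))"
      using keys_sum[of "\<lambda>i. Poly_Mapping.single (w i) (a i)" I] by blast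
    then have "e = w i" by (simp split: if_splits)
    then show "Poly_Mapping.keys e \<subseteq> {..<d}" using assms(2) i(1) by simp
  qed
  moreover have "\<forall>e. Poly_Mapping.lookup (\<Sum>i\<in>I. Poly_Mapping.single (w i) (a i)) e \<in> \<int>"
  proof
    fix e
    have "Poly_Mapping.lookup (\<Sum>i\<in>I. Poly_Mapping.single (w i) (a i)) e = (\<Sum>i\<in>I. (if w i = e then a i else 0))"
      by (simp add: lookup_sum lookup_single when_def)
    also have "\<dots> \<in> \<int>" using assms(3) by (intro Ints_sum) auto
    finally show "Poly_Mapping.lookup (\<Sum>i\<in>I. Poly_Mapping.single (w i) (a i)) e \<in> \<int>" .
  qed
  ultimately show ?thesis by (simp add: K_T_def)
qed

lemma isc_K_T:
  assumes "isc d G \<chi>" shows "\<chi> id \<in> K_T d"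
proof -
  obtain m :: nat and \<rho> wt par where R: "graded_rep d G {..<m} \<rho> wt par" and c: "\<chi> = schar {..<m} \<rho> wt par"
    using assms unfolding isc_def by blast
  show ?thesis unfolding c schar_def
    by (rule sum_single_KT) (use R in \<open>auto simp: gr_fin gr_keys gr_id\<close>)
qed

lemma poly_mapping_monomials: "(\<Sum>e\<in>Poly_Mapping.keys c. Poly_Mapping.single e (Poly_Mapping.lookup c e)) = c"
proof (rule poly_mapping_eqI)
  fix k
  have "Poly_Mapping.lookup (\<Sum>e\<in>Poly_Mapping.keys c. Poly_Mapping.single e (Poly_Mapping.lookup c e)) k
     = (\<Sum>e\<in>Poly_Mapping.keys c. if e = k then Poly_Mapping.lookup c e else 0)"
    by (simp add: lookup_sum lookup_single when_def)
  also have "\<dots> = Poly_Mapping.lookup c k"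
    by (cases "k \<in> Poly_Mapping.keys c") (simp_all add: sum.delta' in_keys_iff)
  finally show "Poly_Mapping.lookup (\<Sum>e\<in>Poly_Mapping.keys c. Poly_Mapping.single e (Poly_Mapping.lookup c e)) k = Poly_Mapping.lookup c k" .
qed

lemma sum_single_const: "(\<Sum>j<N. Poly_Mapping.single e (v::complex)) = Poly_Mapping.single e (of_nat N * v)"
  by (induct N) (simp_all add: single_add algebra_simps)

lemma isc_const:
  assumes "c \<in> K_T d"
  shows "isc d G (\<lambda>_. c)"
proof -
  define k where "k = (\<lambda>e. \<lfloor>Re (Poly_Mapping.lookup c e)\<rfloor>)"
  have kc: "of_int (k e) = Poly_Mapping.lookup c e" for e
  proof -
    have "Poly_Mapping.lookup c e \<in> \<int>" using assms by (simp add: K_T_def)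
    then obtain z where "Poly_Mapping.lookup c e = of_int z" by (auto elim: Ints_cases)
    then show ?thesis by (simp add: k_def)
  qed
  define I where "I = (SIGMA e:Poly_Mapping.keys c. {..<nat \<bar>k e\<bar>})"
  define \<rho> where "\<rho> = (\<lambda>(g::nat\<Rightarrow>nat) (p::(nat \<Rightarrow>\<^sub>0 int) \<times> nat) q. if p = q then (1::complex) else 0)"
  define wt where "wt = (\<lambda>p::(nat \<Rightarrow>\<^sub>0 int) \<times> nat. fst p)"
  define par where "par = (\<lambda>p::(nat \<Rightarrow>\<^sub>0 int) \<times> nat. k (fst p) < 0)"
  have "graded_rep d G I \<rho> wt par"
    unfolding graded_rep_def
  proof (intro conjI ballI)
    show "finite I" by (simp add: I_def)
  next
    fix i assume "i \<in> I"
    then show "Poly_Mapping.keys (wt i) \<subseteq> {..<d}" using assms by (auto simp: K_T_def wt_def I_def)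
  next
    fix g h i j assume ij: "i \<in> I" "j \<in> I"
    have "(\<Sum>k\<in>I. \<rho> g i k * \<rho> h k j) = (\<Sum>k\<in>I. if k = i then \<rho> h i j else 0)"
      by (rule sum.cong) (auto simp: \<rho>_def)
    also have "\<dots> = \<rho> h i j" using ij by (simp add: I_def)
    finally show "\<rho> (g \<circ> h) i j = (\<Sum>k\<in>I. \<rho> g i k * \<rho> h k j)"
      by (simp add: \<rho>_def)
  qed (auto simp: \<rho>_def)
  moreover have "schar I \<rho> wt par = (\<lambda>_. c)"
  proof (rule ext)
    fix g
    have "schar I \<rho> wt par g = (\<Sum>p\<in>I. Poly_Mapping.single (fst p) (if k (fst p) < 0 then -1 else 1))"
      unfolding schar_def by (simp add: \<rho>_def wt_def par_def)
    also have "\<dots> = (\<Sum>e\<in>Poly_Mapping.keys c. \<Sum>j<nat \<bar>k e\<bar>. Poly_Mapping.single e (if k e < 0 then -1 else 1))"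
      unfolding I_def by (subst sum.Sigma) (auto simp: split_beta)
    also have "\<dots> = (\<Sum>e\<in>Poly_Mapping.keys c. Poly_Mapping.single e (of_int (k e)))"
    proof (rule sum.cong)
      fix e
      have "(\<Sum>j<nat \<bar>k e\<bar>. Poly_Mapping.single e (if k e < 0 then -1 else (1::complex)))
         = Poly_Mapping.single e (of_nat (nat \<bar>k e\<bar>) * (if k e < 0 then -1 else 1))"
        by (rule sum_single_const)
      also have "\<dots> = Poly_Mapping.single e (of_int (k e))"
        by (cases "k e < 0") auto
      finally show "(\<Sum>j<nat \<bar>k e\<bar>. Poly_Mapping.single e (if k e < 0 then -1 else (1::complex))) = Poly_Mapping.single e (of_int (k e))" .
    qed simp
    also have "\<dots> = c" by (simp add: kc poly_mapping_monomials)
    finally show "schar I \<rho> wt par g = c" .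
  qed
  ultimately show ?thesis using isc_transport by metis
qed


definition Nset :: "('a \<Rightarrow> nat) \<Rightarrow> ('a \<Rightarrow> nat) \<Rightarrow> 'a set \<Rightarrow> ('a \<times> 'a) set" where
  "Nset ka kb U = {(u, v). u \<in> U \<and> v \<in> U \<and> ka u < ka v \<and> kb v < kb u}"

lemma sym_half:
  fixes k :: "'a \<Rightarrow> nat"
  assumes U: "finite U" and k: "inj_on k U" and X: "X \<subseteq> {(u, v). u \<in> U \<and> v \<in> U \<and> u \<noteq> v}"
    and sym: "\<And>u v. (u, v) \<in> X \<Longrightarrow> (v, u) \<in> X"
  shows "card X = 2 * card {p\<in>X. k (fst p) < k (snd p)}"
proof -
  define X1 where "X1 = {p\<in>X. k (fst p) < k (snd p)}"
  define X2 where "X2 = {p\<in>X. k (snd p) < k (fst p)}"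
  have finX: "finite X" by (rule finite_subset[OF _ finite_cartesian_product[OF U U]]) (use X in auto)
  have XU: "X = X1 \<union> X2"
  proof
    show "X \<subseteq> X1 \<union> X2"
    proof
      fix p assume p: "p \<in> X"
      then obtain u v where uv: "p = (u, v)" "u \<in> U" "v \<in> U" "u \<noteq> v" using X by blast
      then have "k u \<noteq> k v" using k by (meson inj_onD)
      then show "p \<in> X1 \<union> X2" using p uv by (auto simp: X1_def X2_def)
    qed
  qed (auto simp: X1_def X2_def)
  have dj: "X1 \<inter> X2 = {}" by (auto simp: X1_def X2_def)
  have sw: "X2 = prod.swap ` X1"
  proof
    show "X2 \<subseteq> prod.swap ` X1"
    proof
      fix p assume "p \<in> X2"
      then have "prod.swap p \<in> X1" using sym by (cases p) (auto simp: X1_def X2_def)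
      then show "p \<in> prod.swap ` X1" by (metis image_eqI swap_swap)
    qed
  qed (use sym in \<open>auto simp: X1_def X2_def\<close>)
  have cs: "card (prod.swap ` X1) = card X1" by (rule card_image) (metis inj_onI swap_swap)
  have fi: "finite X1" "finite X2" using finX by (auto simp: X1_def X2_def)
  have "card X = card X1 + card X2" using card_Un_disjoint[OF fi dj] XU by simp
  then show ?thesis using sw cs by (simp add: X1_def)
qed

lemma card_symdiff:
  assumes "finite S" "finite T"
  shows "card ((S - T) \<union> (T - S)) + 2 * card (S \<inter> T) = card S + card T"
proof -
  have "card ((S - T) \<union> (T - S)) = card (S - T) + card (T - S)"
    using assms by (intro card_Un_disjoint) auto
  moreover have "card S = card (S - T) + card (S \<inter> T)"
    using assms by (metis card_Int_Diff Int_commute add.commute Diff_Int2 inf.idem)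
  moreover have "card T = card (T - S) + card (S \<inter> T)"
    using assms by (metis card_Int_Diff Int_commute add.commute)
  ultimately show ?thesis by simp
qed

lemma kos_parity:
  fixes k0 k1 k2 :: "'a \<Rightarrow> nat"
  assumes U: "finite U" and i0: "inj_on k0 U" and i1: "inj_on k1 U" and i2: "inj_on k2 U"
  shows "(-1::complex) ^ card (Nset k0 k2 U) = (-1) ^ card (Nset k0 k1 U) * (-1) ^ card (Nset k1 k2 U)"
proof -
  define C where "C = {(u, v). u \<in> U \<and> v \<in> U \<and> k0 u < k0 v \<and> (k1 v < k1 u) \<noteq> (k2 v < k2 u)}"
  define D where "D = {(u, v). u \<in> U \<and> v \<in> U \<and> u \<noteq> v \<and> (k1 v < k1 u) \<noteq> (k2 v < k2 u)}"
  have fin: "finite (U \<times> U)" using U by simp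
  have fS01: "finite (Nset k0 k1 U)" by (rule finite_subset[OF _ fin]) (auto simp: Nset_def)
  have fC: "finite C" by (rule finite_subset[OF _ fin]) (auto simp: C_def)
  have S02: "Nset k0 k2 U = (Nset k0 k1 U - C) \<union> (C - Nset k0 k1 U)"
    by (auto simp: Nset_def C_def)
  have Dsym: "(v, u) \<in> D" if "(u, v) \<in> D" for u v
  proof -
    from that have uv: "u \<in> U" "v \<in> U" "u \<noteq> v" "(k1 v < k1 u) \<noteq> (k2 v < k2 u)" by (auto simp: D_def)
    have "k1 u \<noteq> k1 v" "k2 u \<noteq> k2 v" using uv i1 i2 by (meson inj_onD)+
    then show ?thesis using uv by (auto simp: D_def)
  qed
  have DU: "D \<subseteq> {(u, v). u \<in> U \<and> v \<in> U \<and> u \<noteq> v}" by (auto simp: D_def)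
  have "card D = 2 * card {p\<in>D. k0 (fst p) < k0 (snd p)}" by (rule sym_half[OF U i0 DU Dsym])
  moreover have "card D = 2 * card {p\<in>D. k1 (fst p) < k1 (snd p)}" by (rule sym_half[OF U i1 DU Dsym])
  moreover have "{p\<in>D. k0 (fst p) < k0 (snd p)} = C" by (auto simp: D_def C_def)
  moreover have "{p\<in>D. k1 (fst p) < k1 (snd p)} = Nset k1 k2 U" by (auto simp: D_def Nset_def)
  ultimately have cC: "card C = card (Nset k1 k2 U)" by simp
  have "card (Nset k0 k2 U) + 2 * card (Nset k0 k1 U \<inter> C) = card (Nset k0 k1 U) + card (Nset k1 k2 U)"
    using card_symdiff[OF fS01 fC] S02 cC by simp
  then have "(-1::complex) ^ (card (Nset k0 k2 U) + 2 * card (Nset k0 k1 U \<inter> C)) = (-1) ^ (card (Nset k0 k1 U) + card (Nset k1 k2 U))"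
    by simp
  then show ?thesis by (simp add: power_add power_mult)
qed

lemma cross_even:
  fixes k :: "'a \<Rightarrow> nat" and p :: "'a \<Rightarrow> 'a"
  assumes f1: "finite Y1" and f2: "finite Y2" and disj: "Y1 \<inter> Y2 = {}"
    and p1: "p ` Y1 = Y1" "inj_on p Y1" and p2: "p ` Y2 = Y2" "inj_on p Y2"
    and k: "inj_on k (Y1 \<union> Y2)"
  shows "even (card {(u, v). (u \<in> Y1 \<and> v \<in> Y2 \<or> u \<in> Y2 \<and> v \<in> Y1) \<and> k u < k v \<and> k (p v) < k (p u)})"
proof -
  define Q where "Q = Y1 \<times> Y2"
  define \<alpha> where "\<alpha> = {q\<in>Q. k (fst q) < k (snd q)}"
  define \<beta> where "\<beta> = {q\<in>Q. k (p (fst q)) < k (p (snd q))}"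
  define X12 where "X12 = {(u, v). u \<in> Y1 \<and> v \<in> Y2 \<and> k u < k v \<and> k (p v) < k (p u)}"
  define X21 where "X21 = {(u, v). u \<in> Y2 \<and> v \<in> Y1 \<and> k u < k v \<and> k (p v) < k (p u)}"
  have fQ: "finite Q" using f1 f2 by (simp add: Q_def)
  have fa: "finite \<alpha>" "finite \<beta>" using fQ by (auto simp: \<alpha>_def \<beta>_def)
  have kne: "k a \<noteq> k b" if "a \<in> Y1" "b \<in> Y2" for a b
    using that disj k by (metis Int_iff UnI1 UnI2 empty_iff inj_onD)
  have kne': "k (p a) \<noteq> k (p b)" if "a \<in> Y1" "b \<in> Y2" for a b
    using kne p1 p2 that by blast
  have e1: "X12 = \<alpha> - \<beta>"
  proof
    show "X12 \<subseteq> \<alpha> - \<beta>" by (auto simp: X12_def \<alpha>_def \<beta>_def Q_def)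
    show "\<alpha> - \<beta> \<subseteq> X12"
    proof
      fix q assume q: "q \<in> \<alpha> - \<beta>"
      then obtain a b where ab: "q = (a, b)" "a \<in> Y1" "b \<in> Y2" by (auto simp: \<alpha>_def Q_def)
      have "k (p a) \<noteq> k (p b)" using kne' ab by blast
      then show "q \<in> X12" using q ab by (auto simp: X12_def \<alpha>_def \<beta>_def Q_def)
    qed
  qed
  have e2: "prod.swap ` X21 = \<beta> - \<alpha>"
  proof
    show "prod.swap ` X21 \<subseteq> \<beta> - \<alpha>" by (auto simp: X21_def \<alpha>_def \<beta>_def Q_def)
    show "\<beta> - \<alpha> \<subseteq> prod.swap ` X21"
    proof
      fix q assume q: "q \<in> \<beta> - \<alpha>"
      then obtain a b where ab: "q = (a, b)" "a \<in> Y1" "b \<in> Y2" by (auto simp: \<beta>_def Q_def)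
      have "k b < k a" using q ab kne[of a b] by (auto simp: \<alpha>_def Q_def)
      then have "(b, a) \<in> X21" using q ab by (auto simp: X21_def \<beta>_def)
      then show "q \<in> prod.swap ` X21" using ab by force
    qed
  qed
  have cX21: "card X21 = card (\<beta> - \<alpha>)"
  proof -
    have "card (prod.swap ` X21) = card X21" by (rule card_image) (metis inj_onI swap_swap)
    then show ?thesis using e2 by simp
  qed
  have cross: "{(u, v). (u \<in> Y1 \<and> v \<in> Y2 \<or> u \<in> Y2 \<and> v \<in> Y1) \<and> k u < k v \<and> k (p v) < k (p u)} = X12 \<union> X21"
    by (auto simp: X12_def X21_def)
  have fX: "finite X12" "finite X21"
  proof -
    have "X12 \<subseteq> Y1 \<times> Y2" "X21 \<subseteq> Y2 \<times> Y1" by (auto simp: X12_def X21_def)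
    then show "finite X12" "finite X21" using f1 f2 finite_subset by blast+
  qed
  have dX: "X12 \<inter> X21 = {}" using disj by (auto simp: X12_def X21_def)
  define pp where "pp = (\<lambda>q::'a \<times> 'a. (p (fst q), p (snd q)))"
  have ppb: "pp ` \<beta> = \<alpha>"
  proof
    show "pp ` \<beta> \<subseteq> \<alpha>" using p1 p2 by (auto simp: pp_def \<alpha>_def \<beta>_def Q_def)
    show "\<alpha> \<subseteq> pp ` \<beta>"
    proof
      fix q assume q: "q \<in> \<alpha>"
      then obtain a' b' where ab: "q = (a', b')" "a' \<in> Y1" "b' \<in> Y2" by (auto simp: \<alpha>_def Q_def)
      have "a' \<in> p ` Y1" "b' \<in> p ` Y2" using p1(1) p2(1) ab by simp_all
      then obtain a b where a: "a \<in> Y1" "p a = a'" and b: "b \<in> Y2" "p b = b'" by (metis imageE)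
      have "(a, b) \<in> \<beta>" using a b q ab by (auto simp: \<alpha>_def \<beta>_def Q_def)
      moreover have "q = pp (a, b)" using a b ab by (simp add: pp_def)
      ultimately show "q \<in> pp ` \<beta>" by blast
    qed
  qed
  have "inj_on pp \<beta>"
  proof (rule inj_onI)
    fix q q' assume q: "q \<in> \<beta>" "q' \<in> \<beta>" "pp q = pp q'"
    then have "fst q \<in> Y1" "fst q' \<in> Y1" "snd q \<in> Y2" "snd q' \<in> Y2" by (auto simp: \<beta>_def Q_def)
    moreover have "p (fst q) = p (fst q')" "p (snd q) = p (snd q')" using q(3) by (auto simp: pp_def)
    ultimately have "fst q = fst q'" "snd q = snd q'" using p1(2) p2(2) by (meson inj_onD)+
    then show "q = q'" by (simp add: prod_eq_iff)
  qed
  then have cab: "card \<alpha> = card \<beta>" using ppb card_image by metis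
  have "card (X12 \<union> X21) = card (\<alpha> - \<beta>) + card (\<beta> - \<alpha>)"
    using card_Un_disjoint[OF fX dX] e1 cX21 by simp
  also have "\<dots> = 2 * (card \<alpha> - card (\<alpha> \<inter> \<beta>))"
    using card_Diff_subset_Int fa cab by (simp add: card_Diff_subset_Int Int_commute)
  finally show ?thesis unfolding cross by simp
qed


lemma zero_K_T: "0 \<in> K_T d" by (simp add: K_T_def)

lemma vieta:
  assumes X: "isc d G x" and C: "\<forall>c\<in>set cs. c \<in> K_T d"
  shows "isc d G (\<lambda>_. \<Prod>c\<leftarrow>cs. - c) \<and>
    (\<exists>q. isc d G q \<and> (\<forall>g. x g * q g = (\<Prod>c\<leftarrow>cs. x g - c) - (\<Prod>c\<leftarrow>cs. - c)))"
  using C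
proof (induction cs)
  case Nil
  have "(1::laur) = (\<Sum>i\<in>{()}. Poly_Mapping.single 0 1)" by simp
  also have "\<dots> \<in> K_T d" by (rule sum_single_KT) auto
  finally have "isc d G (\<lambda>_. 1)" using isc_const by blast
  moreover have "isc d G (\<lambda>_. 0)" using isc_const[OF zero_K_T] by blast
  ultimately show ?case by auto
next
  case (Cons c cs)
  then have c: "c \<in> K_T d" and IH: "isc d G (\<lambda>_. \<Prod>c\<leftarrow>cs. - c)"
    "\<exists>q. isc d G q \<and> (\<forall>g. x g * q g = (\<Prod>c\<leftarrow>cs. x g - c) - (\<Prod>c\<leftarrow>cs. - c))" by auto
  obtain q where q: "isc d G q" "\<forall>g. x g * q g = (\<Prod>c\<leftarrow>cs. x g - c) - (\<Prod>c\<leftarrow>cs. - c)" using IH(2) by blast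
  have cc: "isc d G (\<lambda>_. - c)" using isc_neg[OF isc_const[OF c]] by simp
  have A1: "isc d G (\<lambda>_. \<Prod>c\<leftarrow>c # cs. - c)" using isc_mult[OF cc IH(1)] by simp
  have A2: "isc d G (\<lambda>g. (x g + - c) * q g + (\<Prod>c\<leftarrow>cs. - c))"
    using isc_add[OF isc_mult[OF isc_add[OF X cc] q(1)] IH(1)] by simp
  have "\<forall>g. x g * ((x g + - c) * q g + (\<Prod>c\<leftarrow>cs. - c)) = (\<Prod>c\<leftarrow>c # cs. x g - c) - (\<Prod>c\<leftarrow>c # cs. - c)"
  proof
    fix g
    have "x g * ((x g + - c) * q g + (\<Prod>c\<leftarrow>cs. - c)) = (x g - c) * (x g * q g) + x g * (\<Prod>c\<leftarrow>cs. - c)"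
      by (simp add: algebra_simps)
    also have "\<dots> = (x g - c) * ((\<Prod>c\<leftarrow>cs. x g - c) - (\<Prod>c\<leftarrow>cs. - c)) + x g * (\<Prod>c\<leftarrow>cs. - c)"
      using q(2) by simp
    also have "\<dots> = (\<Prod>c\<leftarrow>c # cs. x g - c) - (\<Prod>c\<leftarrow>c # cs. - c)"
      by (simp add: algebra_simps)
    finally show "x g * ((x g + - c) * q g + (\<Prod>c\<leftarrow>cs. - c)) = (\<Prod>c\<leftarrow>c # cs. x g - c) - (\<Prod>c\<leftarrow>c # cs. - c)" .
  qed
  with A1 A2 show ?case by blast
qed

lemma isc_K_equiv:
  assumes "isc d G q" shows "q \<in> K_equiv d G"
proof -
  obtain m :: nat and \<rho> wt par where R: "graded_rep d G {..<m} \<rho> wt par" and c: "q = schar {..<m} \<rho> wt par"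
    using assms unfolding isc_def by blast
  have R0: "graded_rep d G {..<(0::nat)} \<rho> wt par" by (simp add: graded_rep_def)
  have "q = (\<lambda>g. schar {..<m} \<rho> wt par g - schar {..<(0::nat)} \<rho> wt par g)"
    by (rule ext) (simp add: c schar_def)
  with R R0 show ?thesis unfolding K_equiv_def by blast
qed

lemma unit_loc_crit:
  assumes X: "isc d G x" and fin: "finite G" and idG: "id \<in> G"
    and KT: "\<And>g. g \<in> G \<Longrightarrow> x g \<in> K_T d"
    and nz: "\<And>g. g \<in> G \<Longrightarrow> x g \<noteq> 0"
  shows "unit_loc d G x"
proof -
  obtain hs where hs: "set hs = G" using finite_list[OF fin] by blast
  define cs where "cs = map x hs"
  have C: "\<forall>c\<in>set cs. c \<in> K_T d" using KT hs by (auto simp: cs_def)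
  obtain q where q: "isc d G q" "\<forall>g. x g * q g = (\<Prod>c\<leftarrow>cs. x g - c) - (\<Prod>c\<leftarrow>cs. - c)"
    using vieta[OF X C] by blast
  define s where "s = - (\<Prod>c\<leftarrow>cs. - c)"
  have xs: "x g * q g = s" if g: "g \<in> G" for g
  proof -
    have "x g \<in> set cs" using g hs by (auto simp: cs_def)
    then have "(\<Prod>c\<leftarrow>cs. x g - c) = 0" by (auto simp: prod_list_zero_iff)
    then show ?thesis using q(2) by (simp add: s_def)
  qed
  have "s \<noteq> 0" unfolding s_def using nz hs by (auto simp: prod_list_zero_iff cs_def)
  moreover have "s \<in> K_T d"
  proof -
    have "(\<lambda>g. x g * q g) id \<in> K_T d" using isc_K_T[OF isc_mult[OF X q(1)]] .
    then show ?thesis using xs[OF idG] by simp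
  qed
  ultimately show ?thesis unfolding unit_loc_def using xs isc_K_equiv[OF q(1)] by blast
qed


context
  fixes n :: nat and A :: "nat set set"
  assumes part: "partition_on {1..n} A"
begin

lemma finA: "finite A"
  using part by (metis finite_UnionD finite_atLeastAtMost partition_onD1)

lemma blk: "B \<in> A \<Longrightarrow> B \<subseteq> {1..n} \<and> B \<noteq> {} \<and> finite B"
  using part unfolding partition_on_def by (auto intro: finite_subset)

lemma Min_inj: "inj_on Min A"
proof (rule inj_onI)
  fix B B' assume B: "B \<in> A" "B' \<in> A" "Min B = Min B'"
  then have "Min B \<in> B" "Min B \<in> B'" using blk[of B] blk[of B'] by (metis Min_in)+
  then show "B = B'" using part B unfolding partition_on_def disjoint_def by blast
qed

lemma G_perm: "\<sigma> \<in> Sym_part n A \<Longrightarrow> \<sigma> permutes {1..n}"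
  by (simp add: Sym_part_def)

lemma G_blk: "\<sigma> \<in> Sym_part n A \<Longrightarrow> B \<in> A \<Longrightarrow> \<sigma> ` B \<in> A"
  by (simp add: Sym_part_def)

lemma G_cancel1: "\<sigma> \<in> Sym_part n A \<Longrightarrow> B \<in> A \<Longrightarrow> inv_into {1..n} \<sigma> ` (\<sigma> ` B) = B"
  using blk[of B] G_perm[of \<sigma>] by (intro inv_into_image_cancel) (auto simp: permutes_inj_on)

lemma G_cancel2: "\<sigma> \<in> Sym_part n A \<Longrightarrow> B \<subseteq> {1..n} \<Longrightarrow> \<sigma> ` (inv_into {1..n} \<sigma> ` B) = B"
  using G_perm[of \<sigma>] by (intro image_inv_into_cancel) (auto simp: permutes_image)

lemma G_blk_inj: "\<sigma> \<in> Sym_part n A \<Longrightarrow> inj_on ((`) \<sigma>) A"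
  by (rule inj_onI) (metis G_cancel1)

lemma G_blk_surj: "\<sigma> \<in> Sym_part n A \<Longrightarrow> (`) \<sigma> ` A = A"
  by (rule endo_inj_surj[OF finA]) (auto simp: G_blk G_blk_inj)

lemma G_ib: "\<sigma> \<in> Sym_part n A \<Longrightarrow> B \<in> A \<Longrightarrow> inv_into {1..n} \<sigma> ` B \<in> A"
proof -
  assume s: "\<sigma> \<in> Sym_part n A" and B: "B \<in> A"
  then obtain B' where "B' \<in> A" "B = \<sigma> ` B'" using G_blk_surj[OF s] by blast
  then show ?thesis using G_cancel1[OF s] by simp
qed

lemma G_cancel2': "\<sigma> \<in> Sym_part n A \<Longrightarrow> B \<in> A \<Longrightarrow> \<sigma> ` (inv_into {1..n} \<sigma> ` B) = B"
  using G_cancel2 blk by blast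

lemma G_blk_bij: "\<sigma> \<in> Sym_part n A \<Longrightarrow> bij_betw ((`) \<sigma>) A A"
  by (simp add: bij_betw_def G_blk_inj G_blk_surj)

lemma G_ib_bij: "\<sigma> \<in> Sym_part n A \<Longrightarrow> bij_betw (\<lambda>B. inv_into {1..n} \<sigma> ` B) A A"
proof -
  assume s: "\<sigma> \<in> Sym_part n A"
  have "inj_on (\<lambda>B. inv_into {1..n} \<sigma> ` B) A"
  proof (rule inj_onI)
    fix B B' assume "B \<in> A" "B' \<in> A" "inv_into {1..n} \<sigma> ` B = inv_into {1..n} \<sigma> ` B'"
    then show "B = B'" using G_cancel2'[OF s] by metis
  qed
  moreover have "(\<lambda>B. inv_into {1..n} \<sigma> ` B) ` A = A"
  proof
    show "(\<lambda>B. inv_into {1..n} \<sigma> ` B) ` A \<subseteq> A" using G_ib[OF s] by blast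
    show "A \<subseteq> (\<lambda>B. inv_into {1..n} \<sigma> ` B) ` A"
    proof
      fix B assume B: "B \<in> A"
      then have "B = inv_into {1..n} \<sigma> ` (\<sigma> ` B)" using G_cancel1[OF s B] by simp
      then show "B \<in> (\<lambda>B. inv_into {1..n} \<sigma> ` B) ` A" using G_blk[OF s B] by blast
    qed
  qed
  ultimately show ?thesis by (simp add: bij_betw_def)
qed

lemma G_id: "id \<in> Sym_part n A"
  by (simp add: Sym_part_def permutes_id)

lemma G_comp: "\<sigma> \<in> Sym_part n A \<Longrightarrow> \<tau> \<in> Sym_part n A \<Longrightarrow> \<sigma> \<circ> \<tau> \<in> Sym_part n A"
proof -
  assume s: "\<sigma> \<in> Sym_part n A" and t: "\<tau> \<in> Sym_part n A"
  have "\<sigma> \<circ> \<tau> permutes {1..n}" by (rule permutes_compose[OF G_perm[OF t] G_perm[OF s]])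
  moreover have "\<forall>B\<in>A. (\<sigma> \<circ> \<tau>) ` B \<in> A"
    by (metis G_blk image_comp s t)
  ultimately show ?thesis unfolding Sym_part_def by blast
qed

lemma G_fin: "finite (Sym_part n A)"
  by (rule finite_subset[OF _ finite_permutations[of "{1..n}"]]) (auto simp: Sym_part_def)

lemma G_ib_comp: "\<sigma> \<in> Sym_part n A \<Longrightarrow> \<tau> \<in> Sym_part n A \<Longrightarrow> B \<in> A \<Longrightarrow>
   inv_into {1..n} (\<sigma> \<circ> \<tau>) ` B = inv_into {1..n} \<tau> ` (inv_into {1..n} \<sigma> ` B)"
proof -
  assume s: "\<sigma> \<in> Sym_part n A" and t: "\<tau> \<in> Sym_part n A" and B: "B \<in> A"
  define C where "C = inv_into {1..n} \<tau> ` (inv_into {1..n} \<sigma> ` B)"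
  have C: "C \<in> A" unfolding C_def using s t B G_ib by blast
  have "(\<sigma> \<circ> \<tau>) ` C = \<sigma> ` (\<tau> ` C)" by (rule image_comp[symmetric])
  also have "\<tau> ` C = inv_into {1..n} \<sigma> ` B" unfolding C_def using G_cancel2'[OF t] G_ib[OF s B] .
  also have "\<sigma> ` \<dots> = B" using G_cancel2'[OF s B] .
  finally have "(\<sigma> \<circ> \<tau>) ` C = B" .
  then show ?thesis using G_cancel1[OF G_comp[OF s t] C] unfolding C_def by metis
qed

end


definition act :: "nat \<Rightarrow> nat set set \<Rightarrow> (nat \<Rightarrow> nat) \<Rightarrow> (nat set \<Rightarrow> nat) \<Rightarrow> (nat set \<Rightarrow> nat)" where
  "act n A \<sigma> f = (\<lambda>B\<in>A. f (inv_into {1..n} \<sigma> ` B))"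

definition Od :: "nat set set \<Rightarrow> ((nat \<Rightarrow>\<^sub>0 int) \<times> bool) list \<Rightarrow> (nat set \<Rightarrow> nat) \<Rightarrow> nat set set" where
  "Od U ds f = {B\<in>U. snd (ds ! f B)}"

lemma tens_rho_act: "tens_rho n A ds \<sigma> g f = (if g = act n A \<sigma> f then koszul A ds \<sigma> f else 0)"
  by (simp add: tens_rho_def act_def)

lemma koszul_Nset: "koszul A ds \<sigma> f = (-1) ^ card (Nset Min (\<lambda>B. Min (\<sigma> ` B)) (Od A ds f))"
proof -
  have "{(B, B'). B \<in> A \<and> B' \<in> A \<and> Min B < Min B' \<and> Min (\<sigma> ` B') < Min (\<sigma> ` B) \<and> snd (ds ! f B) \<and> snd (ds ! f B')}
     = Nset Min (\<lambda>B. Min (\<sigma> ` B)) (Od A ds f)" by (auto simp: Nset_def Od_def)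
  then show ?thesis by (simp add: koszul_def)
qed

lemma Nset_image:
  assumes "inj_on h U"
  shows "card (Nset ka kb (h ` U)) = card (Nset (\<lambda>u. ka (h u)) (\<lambda>u. kb (h u)) U)"
proof -
  have "Nset ka kb (h ` U) = (\<lambda>(u, v). (h u, h v)) ` Nset (\<lambda>u. ka (h u)) (\<lambda>u. kb (h u)) U"
    by (auto simp: Nset_def image_iff)
  moreover have "inj_on (\<lambda>(u, v). (h u, h v)) (Nset (\<lambda>u. ka (h u)) (\<lambda>u. kb (h u)) U)"
    using assms by (auto simp: inj_on_def Nset_def)
  ultimately show ?thesis by (simp add: card_image)
qed

lemma card_bij_filter:
  assumes "bij_betw h S S"
  shows "card {x\<in>S. P (h x)} = card {x\<in>S. P x}"
proof -
  have "h ` {x\<in>S. P (h x)} = {x\<in>S. P x}"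
    using assms by (auto simp: bij_betw_def)
  moreover have "inj_on h {x\<in>S. P (h x)}"
    using assms by (auto simp: bij_betw_def inj_on_def)
  ultimately show ?thesis by (metis card_image)
qed

context
  fixes n :: nat and A :: "nat set set"
  assumes part: "partition_on {1..n} A"
begin

lemma act_apply: "B \<in> A \<Longrightarrow> act n A \<sigma> f B = f (inv_into {1..n} \<sigma> ` B)"
  by (simp add: act_def)

lemma act_mem: "\<sigma> \<in> Sym_part n A \<Longrightarrow> f \<in> PiE A (\<lambda>_. {..<L}) \<Longrightarrow> act n A \<sigma> f \<in> PiE A (\<lambda>_. {..<L})"
  unfolding act_def using G_ib[OF part] by (auto simp: PiE_iff)

lemma act_id: "f \<in> PiE A (\<lambda>_. {..<L}) \<Longrightarrow> act n A id f = f"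
proof -
  assume f: "f \<in> PiE A (\<lambda>_. {..<L})"
  have "inv_into {1..n} id ` B = B" if "B \<in> A" for B
  proof -
    have "B \<subseteq> {1..n}" using blk[OF part that] by blast
    then show ?thesis using inv_into_image_cancel[of id "{1..n}" B] by simp
  qed
  then have "act n A id f = restrict f A" by (auto simp: act_def)
  also have "\<dots> = f" using f by (simp add: PiE_restrict)
  finally show ?thesis .
qed

lemma act_comp: "\<sigma> \<in> Sym_part n A \<Longrightarrow> \<tau> \<in> Sym_part n A \<Longrightarrow>
    act n A (\<sigma> \<circ> \<tau>) f = act n A \<sigma> (act n A \<tau> f)"
proof (rule ext)
  fix B assume s: "\<sigma> \<in> Sym_part n A" and t: "\<tau> \<in> Sym_part n A"
  show "act n A (\<sigma> \<circ> \<tau>) f B = act n A \<sigma> (act n A \<tau> f) B"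
  proof (cases "B \<in> A")
    case True
    then have "inv_into {1..n} \<sigma> ` B \<in> A" using G_ib[OF part s] by blast
    then show ?thesis using True G_ib_comp[OF part s t True] by (simp add: act_def)
  qed (simp add: act_def)
qed

lemma Od_act:
  assumes t: "\<tau> \<in> Sym_part n A"
  shows "Od A ds (act n A \<tau> f) = (`) \<tau> ` Od A ds f"
proof
  show "Od A ds (act n A \<tau> f) \<subseteq> (`) \<tau> ` Od A ds f"
  proof
    fix C assume C: "C \<in> Od A ds (act n A \<tau> f)"
    then have CA: "C \<in> A" and o: "snd (ds ! f (inv_into {1..n} \<tau> ` C))" by (auto simp: Od_def act_def)
    have "inv_into {1..n} \<tau> ` C \<in> Od A ds f" using G_ib[OF part t CA] o by (simp add: Od_def)
    moreover have "C = \<tau> ` (inv_into {1..n} \<tau> ` C)" using G_cancel2'[OF part t CA] by simp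
    ultimately show "C \<in> (`) \<tau> ` Od A ds f" by blast
  qed
  show "(`) \<tau> ` Od A ds f \<subseteq> Od A ds (act n A \<tau> f)"
  proof
    fix C assume "C \<in> (`) \<tau> ` Od A ds f"
    then obtain B where B: "B \<in> A" "snd (ds ! f B)" "C = \<tau> ` B" by (auto simp: Od_def)
    have "C \<in> A" using G_blk[OF part t B(1)] B(3) by simp
    moreover have "inv_into {1..n} \<tau> ` C = B" using G_cancel1[OF part t B(1)] B(3) by simp
    ultimately show "C \<in> Od A ds (act n A \<tau> f)" using B by (simp add: Od_def act_def)
  qed
qed

lemma koszul_cocycle:
  assumes s: "\<sigma> \<in> Sym_part n A" and t: "\<tau> \<in> Sym_part n A"
  shows "koszul A ds (\<sigma> \<circ> \<tau>) f = koszul A ds \<sigma> (act n A \<tau> f) * koszul A ds \<tau> f"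
proof -
  define U where "U = Od A ds f"
  have UA: "U \<subseteq> A" by (auto simp: U_def Od_def)
  have fU: "finite U" using finite_subset[OF UA finA[OF part]] .
  have i0: "inj_on Min U" using inj_on_subset[OF Min_inj[OF part] UA] .
  have iA: "inj_on (\<lambda>B. Min (\<rho> ` B)) A" if r: "\<rho> \<in> Sym_part n A" for \<rho>
  proof (rule inj_onI)
    fix B B' assume B: "B \<in> A" "B' \<in> A" "Min (\<rho> ` B) = Min (\<rho> ` B')"
    have "\<rho> ` B \<in> A" "\<rho> ` B' \<in> A" using G_blk[OF part r] B by auto
    then have "\<rho> ` B = \<rho> ` B'" using inj_onD[OF Min_inj[OF part] B(3)] by blast
    then show "B = B'" using inj_onD[OF G_blk_inj[OF part r]] B(1,2) by blast
  qed
  have i1: "inj_on (\<lambda>B. Min (\<tau> ` B)) U" using inj_on_subset[OF iA[OF t] UA] .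
  have i2: "inj_on (\<lambda>B. Min ((\<sigma> \<circ> \<tau>) ` B)) U" using inj_on_subset[OF iA[OF G_comp[OF part s t]] UA] .
  have injt: "inj_on ((`) \<tau>) U" using inj_on_subset[OF G_blk_inj[OF part t] UA] .
  have "koszul A ds \<sigma> (act n A \<tau> f) = (-1) ^ card (Nset Min (\<lambda>B. Min (\<sigma> ` B)) ((`) \<tau> ` U))"
    by (simp add: koszul_Nset Od_act[OF t] U_def)
  also have "\<dots> = (-1) ^ card (Nset (\<lambda>B. Min (\<tau> ` B)) (\<lambda>B. Min ((\<sigma> \<circ> \<tau>) ` B)) U)"
    using Nset_image[OF injt, of Min "\<lambda>B. Min (\<sigma> ` B)"] by (simp add: image_comp)
  finally have k1: "koszul A ds \<sigma> (act n A \<tau> f) = \<dots>" .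
  have k0: "koszul A ds (\<sigma> \<circ> \<tau>) f = (-1) ^ card (Nset Min (\<lambda>B. Min ((\<sigma> \<circ> \<tau>) ` B)) U)"
    unfolding koszul_Nset U_def ..
  have k2: "koszul A ds \<tau> f = (-1) ^ card (Nset Min (\<lambda>B. Min (\<tau> ` B)) U)"
    unfolding koszul_Nset U_def ..
  show ?thesis
    unfolding k0 k1 k2 using kos_parity[OF fU i0 i1 i2] by (metis mult.commute)
qed

lemma koszul_id: "koszul A ds id f = 1"
  unfolding koszul_def
proof -
  have e: "{(B, B'). B \<in> A \<and> B' \<in> A \<and> Min B < Min B' \<and> Min (id ` B') < Min (id ` B) \<and> snd (ds ! f B) \<and> snd (ds ! f B')} = {}"
    by auto
  show "(-1) ^ card {(B, B'). B \<in> A \<and> B' \<in> A \<and> Min B < Min B' \<and> Min (id ` B') < Min (id ` B) \<and> snd (ds ! f B) \<and> snd (ds ! f B')} = (1::complex)"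
    by (subst e) simp
qed

lemma tens_graded_rep:
  assumes keys: "\<forall>(w, p)\<in>set ds. Poly_Mapping.keys w \<subseteq> {..<d}"
  shows "graded_rep d (Sym_part n A) (tens_basis A ds) (tens_rho n A ds) (tens_wt A ds) (tens_par A ds)"
  unfolding graded_rep_def
proof (intro conjI ballI)
  show "finite (tens_basis A ds)" by (simp add: tens_basis_def finA[OF part] finite_PiE)
next
  fix f assume f: "f \<in> tens_basis A ds"
  show "Poly_Mapping.keys (tens_wt A ds f) \<subseteq> {..<d}"
  proof
    fix x assume "x \<in> Poly_Mapping.keys (tens_wt A ds f)"
    then obtain B where B: "B \<in> A" "x \<in> Poly_Mapping.keys (fst (ds ! f B))"
      unfolding tens_wt_def using keys_sum[of "\<lambda>B. fst (ds ! f B)" A] by blast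
    have "f B < length ds" using f B(1) by (auto simp: tens_basis_def)
    then have "ds ! f B \<in> set ds" by simp
    moreover have "\<forall>q\<in>set ds. Poly_Mapping.keys (fst q) \<subseteq> {..<d}" using keys by (simp add: case_prod_beta)
    ultimately have "Poly_Mapping.keys (fst (ds ! f B)) \<subseteq> {..<d}" by blast
    then show "x \<in> {..<d}" using B(2) by blast
  qed
next
  fix g f assume g: "g \<in> tens_basis A ds" and f: "f \<in> tens_basis A ds"
  show "tens_rho n A ds id g f = (if g = f then 1 else 0)"
    using act_id[of f "length ds"] f by (simp add: tens_rho_act koszul_id tens_basis_def)
next
  fix \<sigma> \<tau> g f assume s: "\<sigma> \<in> Sym_part n A" and t: "\<tau> \<in> Sym_part n A"
    and g: "g \<in> tens_basis A ds" and f: "f \<in> tens_basis A ds"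
  have af: "act n A \<tau> f \<in> tens_basis A ds" using act_mem[OF s] act_mem[OF t] f by (simp add: tens_basis_def)
  have "(\<Sum>k\<in>tens_basis A ds. tens_rho n A ds \<sigma> g k * tens_rho n A ds \<tau> k f)
      = (\<Sum>k\<in>tens_basis A ds. if k = act n A \<tau> f then tens_rho n A ds \<sigma> g k * koszul A ds \<tau> f else 0)"
    by (rule sum.cong) (auto simp: tens_rho_act)
  also have "\<dots> = tens_rho n A ds \<sigma> g (act n A \<tau> f) * koszul A ds \<tau> f"
    using af by (simp add: sum.delta' tens_basis_def finA[OF part] finite_PiE)
  also have "\<dots> = tens_rho n A ds (\<sigma> \<circ> \<tau>) g f"
    by (simp add: tens_rho_act act_comp[OF s t] koszul_cocycle[OF s t])
  finally show "tens_rho n A ds (\<sigma> \<circ> \<tau>) g f = (\<Sum>k\<in>tens_basis A ds. tens_rho n A ds \<sigma> g k * tens_rho n A ds \<tau> k f)"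
    by simp
next
  fix \<sigma> g f assume s: "\<sigma> \<in> Sym_part n A" and g: "g \<in> tens_basis A ds" and f: "f \<in> tens_basis A ds"
  show "tens_rho n A ds \<sigma> g f \<noteq> 0 \<longrightarrow> tens_wt A ds g = tens_wt A ds f \<and> tens_par A ds g = tens_par A ds f"
  proof
    assume "tens_rho n A ds \<sigma> g f \<noteq> 0"
    then have gf: "g = act n A \<sigma> f" by (simp add: tens_rho_act split: if_splits)
    have bij: "bij_betw (\<lambda>B. inv_into {1..n} \<sigma> ` B) A A" using G_ib_bij[OF part s] .
    have "tens_wt A ds g = (\<Sum>B\<in>A. fst (ds ! f (inv_into {1..n} \<sigma> ` B)))"
      by (simp add: gf tens_wt_def act_def)
    also have "\<dots> = tens_wt A ds f"
      unfolding tens_wt_def by (rule sum.reindex_bij_betw[OF bij, of "\<lambda>B. fst (ds ! f B)"])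
    finally have "tens_wt A ds g = tens_wt A ds f" .
    moreover have "tens_par A ds g = tens_par A ds f"
    proof -
      have "{B \<in> A. snd (ds ! g B)} = {B \<in> A. snd (ds ! f (inv_into {1..n} \<sigma> ` B))}"
        by (auto simp: gf act_def)
      then show ?thesis
        using card_bij_filter[OF bij, of "\<lambda>B. snd (ds ! f B)"] by (simp add: tens_par_def)
    qed
    ultimately show "tens_wt A ds g = tens_wt A ds f \<and> tens_par A ds g = tens_par A ds f" ..
  qed
qed

end


definition Fx :: "(nat \<Rightarrow> nat) \<Rightarrow> nat \<Rightarrow> nat set set \<Rightarrow> (nat set \<Rightarrow> nat) set" where
  "Fx \<sigma> L U = {f \<in> PiE U (\<lambda>_. {..<L}). \<forall>B\<in>U. f (\<sigma> ` B) = f B}"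

definition summ :: "((nat \<Rightarrow>\<^sub>0 int) \<times> bool) list \<Rightarrow> (nat \<Rightarrow> nat) \<Rightarrow> nat set set \<Rightarrow> (nat set \<Rightarrow> nat) \<Rightarrow> laur" where
  "summ ds \<sigma> U f = Poly_Mapping.single (\<Sum>B\<in>U. fst (ds ! f B))
     ((-1) ^ card (Od U ds f) * (-1) ^ card (Nset Min (\<lambda>B. Min (\<sigma> ` B)) (Od U ds f)))"

definition XU :: "((nat \<Rightarrow>\<^sub>0 int) \<times> bool) list \<Rightarrow> (nat \<Rightarrow> nat) \<Rightarrow> nat set set \<Rightarrow> laur" where
  "XU ds \<sigma> U = (\<Sum>f\<in>Fx \<sigma> (length ds) U. summ ds \<sigma> U f)"

lemma classD_sum: "classD ds = (\<Sum>i<length ds. Poly_Mapping.single (fst (ds ! i)) (if snd (ds ! i) then -1 else 1))"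
  unfolding classD_def by (simp add: sum_list_sum_nth lessThan_atLeast0 case_prod_beta)

lemma XU_empty: "XU ds \<sigma> {} = 1"
  by (simp add: XU_def Fx_def summ_def Od_def Nset_def)

lemma sum_if_of_nat: "(\<Sum>i<(L::nat). if P i then (1::complex) else 0) = of_nat (\<Sum>i<L. if P i then (1::nat) else 0)"
  by (induct L) auto

lemma scaled_nz:
  fixes Ob :: "'a set"
  assumes fO: "finite Ob" and nO: "Ob \<noteq> {}" and eta: "\<eta> = 1 \<or> \<eta> = -1" and P: "classD ds \<noteq> 0"
  shows "(\<Sum>i<length ds. Poly_Mapping.single (\<Sum>B\<in>Ob. fst (ds ! i)) (if snd (ds ! i) then \<eta> else (1::complex))) \<noteq> 0"
proof -
  define sc where "sc = (\<lambda>w::nat \<Rightarrow>\<^sub>0 int. \<Sum>B\<in>Ob. w)"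
  have cpos: "card Ob > 0" using fO nO by (simp add: card_gt_0_iff)
  have lsc: "Poly_Mapping.lookup (sc w) k = int (card Ob) * Poly_Mapping.lookup w k" for w k
    unfolding sc_def lookup_sum by simp
  have scinj: "sc w = sc w' \<longleftrightarrow> w = w'" for w w'
  proof
    assume "sc w = sc w'"
    then have "\<forall>k. int (card Ob) * Poly_Mapping.lookup w k = int (card Ob) * Poly_Mapping.lookup w' k"
      by (metis lsc)
    then show "w = w'" using cpos by (intro poly_mapping_eqI) simp
  qed simp
  define Y where "Y = (\<Sum>i<length ds. Poly_Mapping.single (sc (fst (ds ! i))) (if snd (ds ! i) then \<eta> else (1::complex)))"
  have lY: "Poly_Mapping.lookup Y (sc k) = (\<Sum>i<length ds. if fst (ds ! i) = k then (if snd (ds ! i) then \<eta> else 1) else 0)" for k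
    unfolding Y_def lookup_sum by (intro sum.cong) (auto simp: lookup_single when_def scinj)
  have "Y \<noteq> 0"
  proof (cases "\<eta> = -1")
    case True
    obtain k where k: "Poly_Mapping.lookup (classD ds) k \<noteq> 0"
      using P by (metis lookup_zero poly_mapping_eqI)
    have "Poly_Mapping.lookup (classD ds) k = (\<Sum>i<length ds. if fst (ds ! i) = k then (if snd (ds ! i) then -1 else 1) else 0)"
      unfolding classD_sum lookup_sum by (intro sum.cong) (auto simp: lookup_single when_def)
    then have "Poly_Mapping.lookup Y (sc k) \<noteq> 0" using k unfolding lY[of k] True by simp
    then show ?thesis by auto
  next
    case False
    then have e1: "\<eta> = 1" using eta by simp
    have L: "length ds > 0"
    proof (rule ccontr)
      assume "\<not> length ds > 0"
      then have "ds = []" by simp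
      then show False using P by (simp add: classD_def)
    qed
    define k where "k = fst (ds ! 0)"
    have "Poly_Mapping.lookup Y (sc k) = (\<Sum>i<length ds. if fst (ds ! i) = k then 1 else 0)"
      unfolding lY[of k] by (intro sum.cong refl) (simp add: e1)
    also have "\<dots> = of_nat (\<Sum>i<length ds. if fst (ds ! i) = k then 1 else 0)"
      by (rule sum_if_of_nat)
    finally have eq: "Poly_Mapping.lookup Y (sc k) = of_nat (\<Sum>i<length ds. if fst (ds ! i) = k then 1 else 0)" .
    have "(1::nat) \<le> (\<Sum>i<length ds. if fst (ds ! i) = k then 1 else 0)"
      using member_le_sum[of 0 "{..<length ds}" "\<lambda>i. if fst (ds ! i) = k then (1::nat) else 0"] L
      by (simp add: k_def)
    then have "Poly_Mapping.lookup Y (sc k) \<noteq> 0" unfolding eq by (simp only: of_nat_eq_0_iff)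
    then show ?thesis by auto
  qed
  then show ?thesis by (simp add: Y_def sc_def)
qed

context
  fixes n :: nat and A :: "nat set set"
  assumes part: "partition_on {1..n} A"
begin

lemma fixed_iff:
  assumes s: "\<sigma> \<in> Sym_part n A" and f: "f \<in> PiE A (\<lambda>_. {..<L})"
  shows "f = act n A \<sigma> f \<longleftrightarrow> (\<forall>B\<in>A. f (\<sigma> ` B) = f B)"
proof
  assume e: "f = act n A \<sigma> f"
  show "\<forall>B\<in>A. f (\<sigma> ` B) = f B"
  proof
    fix B assume B: "B \<in> A"
    have "f (\<sigma> ` B) = act n A \<sigma> f (\<sigma> ` B)" using e by simp
    also have "\<dots> = f B" using G_blk[OF part s B] G_cancel1[OF part s B] by (simp add: act_def)
    finally show "f (\<sigma> ` B) = f B" .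
  qed
next
  assume h: "\<forall>B\<in>A. f (\<sigma> ` B) = f B"
  show "f = act n A \<sigma> f"
  proof
    fix C show "f C = act n A \<sigma> f C"
    proof (cases "C \<in> A")
      case True
      have "f (\<sigma> ` (inv_into {1..n} \<sigma> ` C)) = f (inv_into {1..n} \<sigma> ` C)" using h G_ib[OF part s True] by blast
      then show ?thesis using G_cancel2'[OF part s True] True by (simp add: act_def)
    next
      case False
      then show ?thesis using f by (simp add: act_def PiE_def extensional_def)
    qed
  qed
qed

lemma tc_XU:
  assumes s: "\<sigma> \<in> Sym_part n A"
  shows "tensor_class n A ds \<sigma> = XU ds \<sigma> A"
proof -
  let ?I = "tens_basis A ds"
  have fI: "finite ?I" by (simp add: tens_basis_def finA[OF part] finite_PiE)
  have FxI: "Fx \<sigma> (length ds) A = ?I \<inter> {f. f = act n A \<sigma> f}"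
    using fixed_iff[OF s] by (auto simp: Fx_def tens_basis_def)
  have "tensor_class n A ds \<sigma> = (\<Sum>f\<in>?I. if f \<in> {f. f = act n A \<sigma> f} then summ ds \<sigma> A f else 0)"
    unfolding tensor_class_def schar_def
  proof (rule sum.cong)
    fix f assume f: "f \<in> ?I"
    show "Poly_Mapping.single (tens_wt A ds f) ((if tens_par A ds f then -1 else 1) * tens_rho n A ds \<sigma> f f)
      = (if f \<in> {f. f = act n A \<sigma> f} then summ ds \<sigma> A f else 0)"
    proof (cases "f = act n A \<sigma> f")
      case True
      have "(if tens_par A ds f then -1 else (1::complex)) = (-1) ^ card (Od A ds f)"
        by (simp add: tens_par_def Od_def)
      then show ?thesis using True
        by (simp add: tens_rho_act summ_def tens_wt_def koszul_Nset)
    qed (simp add: tens_rho_act)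
  qed simp
  also have "\<dots> = XU ds \<sigma> A"
    unfolding XU_def FxI by (rule sum.inter_restrict[OF fI, symmetric])
  finally show ?thesis .
qed

lemma x_K_T:
  assumes s: "\<sigma> \<in> Sym_part n A" and keys: "\<forall>(w, p)\<in>set ds. Poly_Mapping.keys w \<subseteq> {..<d}"
  shows "tensor_class n A ds \<sigma> \<in> K_T d"
proof -
  have R: "graded_rep d (Sym_part n A) (tens_basis A ds) (tens_rho n A ds) (tens_wt A ds) (tens_par A ds)"
    using tens_graded_rep[OF part keys] .
  show ?thesis unfolding tensor_class_def schar_def
  proof (rule sum_single_KT)
    show "finite (tens_basis A ds)" using gr_fin[OF R] .
  next
    fix f assume "f \<in> tens_basis A ds"
    then show "Poly_Mapping.keys (tens_wt A ds f) \<subseteq> {..<d}" using gr_keys[OF R] by blast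
  next
    fix f
    have "koszul A ds \<sigma> f \<in> \<int>" by (simp add: koszul_def)
    then show "(if tens_par A ds f then -1 else 1) * tens_rho n A ds \<sigma> f f \<in> \<int>"
      by (auto simp: tens_rho_act)
  qed
qed

end


definition orb :: "(nat \<Rightarrow> nat) \<Rightarrow> nat set \<Rightarrow> nat set set" where
  "orb \<sigma> B0 = range (\<lambda>j. (((`) \<sigma>) ^^ j) B0)"

lemma orb_sub: "B0 \<in> U \<Longrightarrow> \<forall>B\<in>U. \<sigma> ` B \<in> U \<Longrightarrow> orb \<sigma> B0 \<subseteq> U"
proof -
  assume B0: "B0 \<in> U" and iU: "\<forall>B\<in>U. \<sigma> ` B \<in> U"
  have "(((`) \<sigma>) ^^ j) B0 \<in> U" for j by (induct j) (use B0 iU in auto)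
  then show ?thesis by (auto simp: orb_def)
qed

lemma orb_inv: "B \<in> orb \<sigma> B0 \<Longrightarrow> \<sigma> ` B \<in> orb \<sigma> B0"
proof -
  assume "B \<in> orb \<sigma> B0"
  then obtain j where "B = (((`) \<sigma>) ^^ j) B0" by (auto simp: orb_def)
  then have "\<sigma> ` B = (((`) \<sigma>) ^^ Suc j) B0" by simp
  then show ?thesis unfolding orb_def by (metis rangeI)
qed

lemma orb_self: "B0 \<in> orb \<sigma> B0"
proof -
  have "B0 = (((`) \<sigma>) ^^ 0) B0" by simp
  then show ?thesis unfolding orb_def by blast
qed

lemma Fx_orb_const:
  assumes f: "f \<in> Fx \<sigma> L (orb \<sigma> B0)"
  shows "f = (\<lambda>B\<in>orb \<sigma> B0. f B0)"
proof
  fix B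
  have c: "f ((((`) \<sigma>) ^^ j) B0) = f B0" for j
  proof (induct j)
    case (Suc j)
    have "(((`) \<sigma>) ^^ j) B0 \<in> orb \<sigma> B0" by (auto simp: orb_def)
    then have "f (\<sigma> ` ((((`) \<sigma>) ^^ j) B0)) = f ((((`) \<sigma>) ^^ j) B0)" using f by (auto simp: Fx_def)
    then show ?case using Suc by simp
  qed simp
  show "f B = (\<lambda>B\<in>orb \<sigma> B0. f B0) B"
  proof (cases "B \<in> orb \<sigma> B0")
    case True
    then obtain j where "B = (((`) \<sigma>) ^^ j) B0" by (auto simp: orb_def)
    then show ?thesis using c True by simp
  next
    case False
    then show ?thesis using f by (auto simp: Fx_def PiE_def extensional_def)
  qed
qed

context
  fixes n :: nat and A :: "nat set set"
  assumes part: "partition_on {1..n} A"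
begin

lemma summ_split:
  assumes s: "\<sigma> \<in> Sym_part n A" and UA: "U \<subseteq> A" and VA: "V \<subseteq> A" and disj: "U \<inter> V = {}"
    and iU: "\<forall>B\<in>U. \<sigma> ` B \<in> U" and iV: "\<forall>B\<in>V. \<sigma> ` B \<in> V"
    and f: "f \<in> Fx \<sigma> L (U \<union> V)"
  shows "summ ds \<sigma> (U \<union> V) f = summ ds \<sigma> U (restrict f U) * summ ds \<sigma> V (restrict f V)"
proof -
  define Y1 where "Y1 = Od U ds f"
  define Y2 where "Y2 = Od V ds f"
  define km where "km = (\<lambda>B::nat set. Min (\<sigma> ` B))"
  have fA: "finite A" using finA[OF part] .
  have fU: "finite U" "finite V" using fA UA VA finite_subset by blast+
  have Y1U: "Y1 \<subseteq> U" and Y2V: "Y2 \<subseteq> V" by (auto simp: Y1_def Y2_def Od_def)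
  have fY: "finite Y1" "finite Y2" using fU Y1U Y2V finite_subset by blast+
  have dY: "Y1 \<inter> Y2 = {}" using Y1U Y2V disj by blast
  have fx: "\<And>B. B \<in> U \<union> V \<Longrightarrow> f (\<sigma> ` B) = f B" using f by (auto simp: Fx_def)
  have injA: "inj_on ((`) \<sigma>) A" using G_blk_inj[OF part s] .
  have p1: "(`) \<sigma> ` Y1 = Y1"
  proof (rule endo_inj_surj[OF fY(1)])
    show "(`) \<sigma> ` Y1 \<subseteq> Y1"
    proof
      fix C assume "C \<in> (`) \<sigma> ` Y1"
      then obtain B where B: "B \<in> Y1" "C = \<sigma> ` B" by blast
      then have "B \<in> U" "snd (ds ! f B)" by (auto simp: Y1_def Od_def)
      moreover have "f (\<sigma> ` B) = f B" using fx[of B] \<open>B \<in> U\<close> by blast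
      ultimately show "C \<in> Y1" using iU B(2) by (simp add: Y1_def Od_def)
    qed
    show "inj_on ((`) \<sigma>) Y1" using inj_on_subset[OF injA] Y1U UA by blast
  qed
  have p2: "(`) \<sigma> ` Y2 = Y2"
  proof (rule endo_inj_surj[OF fY(2)])
    show "(`) \<sigma> ` Y2 \<subseteq> Y2"
    proof
      fix C assume "C \<in> (`) \<sigma> ` Y2"
      then obtain B where B: "B \<in> Y2" "C = \<sigma> ` B" by blast
      then have "B \<in> V" "snd (ds ! f B)" by (auto simp: Y2_def Od_def)
      moreover have "f (\<sigma> ` B) = f B" using fx[of B] \<open>B \<in> V\<close> by blast
      ultimately show "C \<in> Y2" using iV B(2) by (simp add: Y2_def Od_def)
    qed
    show "inj_on ((`) \<sigma>) Y2" using inj_on_subset[OF injA] Y2V VA by blast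
  qed
  have i1: "inj_on ((`) \<sigma>) Y1" "inj_on ((`) \<sigma>) Y2"
    using inj_on_subset[OF injA] Y1U UA Y2V VA by blast+
  have "Y1 \<union> Y2 \<subseteq> A" using Y1U UA Y2V VA by blast
  then have kinj: "inj_on Min (Y1 \<union> Y2)" by (rule inj_on_subset[OF Min_inj[OF part]])
  define Cr where "Cr = {(u, v). (u \<in> Y1 \<and> v \<in> Y2 \<or> u \<in> Y2 \<and> v \<in> Y1) \<and> Min u < Min v \<and> Min (\<sigma> ` v) < Min (\<sigma> ` u)}"
  have ev: "even (card Cr)" using cross_even[OF fY dY p1 i1(1) p2 i1(2) kinj] unfolding Cr_def .
  have NU: "Nset Min km (Y1 \<union> Y2) = (Nset Min km Y1 \<union> Nset Min km Y2) \<union> Cr"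
    unfolding Nset_def Cr_def km_def by blast
  have fN: "finite (Nset Min km Y)" if "finite Y" for Y :: "nat set set"
    by (rule finite_subset[of _ "Y \<times> Y"]) (auto simp: Nset_def that)
  have fCr: "finite Cr" by (rule finite_subset[of _ "(Y1 \<union> Y2) \<times> (Y1 \<union> Y2)"]) (auto simp: Cr_def fY)
  have cN: "card (Nset Min km (Y1 \<union> Y2)) = card (Nset Min km Y1) + card (Nset Min km Y2) + card Cr"
  proof -
    have d1: "Nset Min km Y1 \<inter> Nset Min km Y2 = {}" using dY unfolding Nset_def by blast
    have d2: "(Nset Min km Y1 \<union> Nset Min km Y2) \<inter> Cr = {}" using dY unfolding Nset_def Cr_def by blast
    show ?thesis unfolding NU
      using card_Un_disjoint[OF finite_UnI[OF fN[OF fY(1)] fN[OF fY(2)]] fCr d2]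
        card_Un_disjoint[OF fN[OF fY(1)] fN[OF fY(2)] d1] by simp
  qed
  have OdU: "Od (U \<union> V) ds f = Y1 \<union> Y2" by (auto simp: Od_def Y1_def Y2_def)
  have Od1: "Od U ds (restrict f U) = Y1" by (auto simp: Od_def Y1_def)
  have Od2: "Od V ds (restrict f V) = Y2" by (auto simp: Od_def Y2_def)
  have cY: "card (Y1 \<union> Y2) = card Y1 + card Y2" using card_Un_disjoint[OF fY dY] .
  have sign: "(-1::complex) ^ card (Y1 \<union> Y2) * (-1) ^ card (Nset Min km (Y1 \<union> Y2))
      = ((-1) ^ card Y1 * (-1) ^ card (Nset Min km Y1)) * ((-1) ^ card Y2 * (-1) ^ card (Nset Min km Y2))"
  proof -
    obtain m where m: "card Cr = 2 * m" using ev by blast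
    show ?thesis unfolding cY cN m by (simp add: power_add power_mult)
  qed
  have wt: "(\<Sum>B\<in>U \<union> V. fst (ds ! f B)) = (\<Sum>B\<in>U. fst (ds ! restrict f U B)) + (\<Sum>B\<in>V. fst (ds ! restrict f V B))"
    using sum.union_disjoint[OF fU disj, of "\<lambda>B. fst (ds ! f B)"] by simp
  show ?thesis
    unfolding summ_def OdU Od1 Od2 wt mult_single km_def[symmetric] sign ..
qed

lemma XU_split:
  assumes s: "\<sigma> \<in> Sym_part n A" and UA: "U \<subseteq> A" and VA: "V \<subseteq> A" and disj: "U \<inter> V = {}"
    and iU: "\<forall>B\<in>U. \<sigma> ` B \<in> U" and iV: "\<forall>B\<in>V. \<sigma> ` B \<in> V"
  shows "XU ds \<sigma> (U \<union> V) = XU ds \<sigma> U * XU ds \<sigma> V"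
proof -
  let ?L = "length ds"
  define mrg where "mrg = (\<lambda>(a::nat set \<Rightarrow> nat, b::nat set \<Rightarrow> nat). (\<lambda>B. if B \<in> U then a B else b B))"
  define spl where "spl = (\<lambda>f::nat set \<Rightarrow> nat. (restrict f U, restrict f V))"
  have "XU ds \<sigma> (U \<union> V) = (\<Sum>p\<in>Fx \<sigma> ?L U \<times> Fx \<sigma> ?L V. summ ds \<sigma> U (fst p) * summ ds \<sigma> V (snd p))"
    unfolding XU_def
  proof (rule sum.reindex_bij_witness[where i = mrg and j = spl])
    fix f assume f: "f \<in> Fx \<sigma> ?L (U \<union> V)"
    show "mrg (spl f) = f"
    proof
      fix B show "mrg (spl f) B = f B"
        using f by (auto simp: mrg_def spl_def Fx_def PiE_def extensional_def)
    qed
    show "spl f \<in> Fx \<sigma> ?L U \<times> Fx \<sigma> ?L V"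
      using f iU iV by (auto simp: spl_def Fx_def)
    show "summ ds \<sigma> U (fst (spl f)) * summ ds \<sigma> V (snd (spl f)) = summ ds \<sigma> (U \<union> V) f"
      using summ_split[OF s UA VA disj iU iV f] by (simp add: spl_def)
  next
    fix p assume p: "p \<in> Fx \<sigma> ?L U \<times> Fx \<sigma> ?L V"
    obtain a b where ab: "p = (a, b)" by (cases p)
    have a: "a \<in> Fx \<sigma> ?L U" and b: "b \<in> Fx \<sigma> ?L V" using p ab by auto
    show "spl (mrg p) = p"
    proof -
      have "restrict (\<lambda>B. if B \<in> U then a B else b B) U = a"
        using a by (auto simp: Fx_def PiE_def extensional_def)
      moreover have "restrict (\<lambda>B. if B \<in> U then a B else b B) V = b"
        using b disj by (intro ext) (auto simp: Fx_def PiE_def extensional_def)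
      ultimately show ?thesis by (simp add: spl_def mrg_def ab)
    qed
    have "mrg p \<in> PiE (U \<union> V) (\<lambda>_. {..<?L})"
      using a b by (auto simp: mrg_def ab Fx_def PiE_def extensional_def)
    moreover have "\<forall>B\<in>U \<union> V. mrg p (\<sigma> ` B) = mrg p B"
    proof
      fix B assume B: "B \<in> U \<union> V"
      show "mrg p (\<sigma> ` B) = mrg p B"
      proof (cases "B \<in> U")
        case True
        then show ?thesis using iU a by (auto simp: mrg_def ab Fx_def)
      next
        case False
        then have "B \<in> V" using B by blast
        then have "\<sigma> ` B \<in> V" "\<sigma> ` B \<notin> U" using iV disj by blast+
        then show ?thesis using False b \<open>B \<in> V\<close> by (auto simp: mrg_def ab Fx_def)
      qed
    qed
    ultimately show "mrg p \<in> Fx \<sigma> ?L (U \<union> V)" by (simp add: Fx_def)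
  qed
  also have "\<dots> = XU ds \<sigma> U * XU ds \<sigma> V"
    unfolding XU_def by (simp add: sum_product sum.cartesian_product case_prod_beta)
  finally show ?thesis .
qed

end


context
  fixes n :: nat and A :: "nat set set"
  assumes part: "partition_on {1..n} A"
begin

lemma XU_orbit_nz:
  assumes s: "\<sigma> \<in> Sym_part n A" and B0: "B0 \<in> A" and P: "classD ds \<noteq> 0"
  shows "XU ds \<sigma> (orb \<sigma> B0) \<noteq> 0"
proof -
  define Ob where "Ob = orb \<sigma> B0"
  define L where "L = length ds"
  have ObA: "Ob \<subseteq> A" unfolding Ob_def by (rule orb_sub[OF B0]) (use G_blk[OF part s] in blast)
  have fOb: "finite Ob" using finite_subset[OF ObA finA[OF part]] .
  have nOb: "Ob \<noteq> {}" using orb_self[of B0 \<sigma>] by (auto simp: Ob_def)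
  define c where "c = (\<lambda>i::nat. (\<lambda>B\<in>Ob. i))"
  have Fxe: "Fx \<sigma> L Ob = c ` {..<L}"
  proof
    show "Fx \<sigma> L Ob \<subseteq> c ` {..<L}"
    proof
      fix f assume f: "f \<in> Fx \<sigma> L Ob"
      then have "f = c (f B0)" using Fx_orb_const[of f \<sigma> L B0] by (simp add: Ob_def c_def)
      moreover have "f B0 < L" using f orb_self[of B0 \<sigma>] by (auto simp: Fx_def Ob_def)
      ultimately show "f \<in> c ` {..<L}" by blast
    qed
    show "c ` {..<L} \<subseteq> Fx \<sigma> L Ob"
      using orb_inv[of _ \<sigma> B0] by (auto simp: Fx_def c_def Ob_def)
  qed
  have injc: "inj_on c {..<L}"
  proof (rule inj_onI)
    fix i j assume "c i = c j"
    then have "c i B0 = c j B0" by simp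
    then show "i = j" using orb_self[of B0 \<sigma>] by (simp add: c_def Ob_def)
  qed
  define \<eta> where "\<eta> = (-1::complex) ^ card Ob * (-1) ^ card (Nset Min (\<lambda>B. Min (\<sigma> ` B)) Ob)"
  have eta: "\<eta> = 1 \<or> \<eta> = -1"
    unfolding \<eta>_def power_add[symmetric] by (cases "even (card Ob + card (Nset Min (\<lambda>B. Min (\<sigma> ` B)) Ob))") auto
  have sc: "summ ds \<sigma> Ob (c i) = Poly_Mapping.single (\<Sum>B\<in>Ob. fst (ds ! i)) (if snd (ds ! i) then \<eta> else 1)" for i
  proof -
    have w: "(\<Sum>B\<in>Ob. fst (ds ! c i B)) = (\<Sum>B\<in>Ob. fst (ds ! i))" by (rule sum.cong) (auto simp: c_def)
    have od: "Od Ob ds (c i) = (if snd (ds ! i) then Ob else {})" by (auto simp: Od_def c_def)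
    have e0: "Nset Min (\<lambda>B. Min (\<sigma> ` B)) {} = {}" by (simp add: Nset_def)
    show ?thesis unfolding summ_def w od by (simp add: \<eta>_def e0)
  qed
  have "XU ds \<sigma> Ob = (\<Sum>i<L. summ ds \<sigma> Ob (c i))"
    unfolding XU_def L_def[symmetric] Fxe by (rule sum.reindex[OF injc, unfolded comp_def])
  also have "\<dots> = (\<Sum>i<length ds. Poly_Mapping.single (\<Sum>B\<in>Ob. fst (ds ! i)) (if snd (ds ! i) then \<eta> else 1))"
    unfolding sc L_def ..
  finally show ?thesis using scaled_nz[OF fOb nOb eta P] by (simp add: Ob_def)
qed

lemma XU_nz:
  assumes s: "\<sigma> \<in> Sym_part n A" and P: "classD ds \<noteq> 0"
  shows "U \<subseteq> A \<Longrightarrow> \<forall>B\<in>U. \<sigma> ` B \<in> U \<Longrightarrow> XU ds \<sigma> U \<noteq> 0"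
proof (induction "card U" arbitrary: U rule: less_induct)
  case less
  show ?case
  proof (cases "U = {}")
    case True
    then show ?thesis by (simp add: XU_empty)
  next
    case False
    then obtain B0 where B0: "B0 \<in> U" by blast
    define Ob where "Ob = orb \<sigma> B0"
    define V where "V = U - Ob"
    have fU: "finite U" using finite_subset[OF less.prems(1) finA[OF part]] .
    have ObU: "Ob \<subseteq> U" unfolding Ob_def by (rule orb_sub[OF B0 less.prems(2)])
    have ObA: "Ob \<subseteq> A" using ObU less.prems(1) by blast
    have B0A: "B0 \<in> A" using B0 less.prems(1) by blast
    have iOb: "\<forall>B\<in>Ob. \<sigma> ` B \<in> Ob" using orb_inv[of _ \<sigma> B0] by (simp add: Ob_def)
    have injA: "inj_on ((`) \<sigma>) A" using G_blk_inj[OF part s] .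
    have injOb: "inj_on ((`) \<sigma>) Ob" by (rule inj_on_subset[OF injA ObA])
    have fOb: "finite Ob" using finite_subset[OF ObU fU] .
    have pOb: "(`) \<sigma> ` Ob = Ob" by (rule endo_inj_surj[OF fOb _ injOb]) (use iOb in blast)
    have iV: "\<forall>B\<in>V. \<sigma> ` B \<in> V"
    proof
      fix B assume B: "B \<in> V"
      then have BU: "B \<in> U" and BO: "B \<notin> Ob" by (auto simp: V_def)
      have "\<sigma> ` B \<in> U" using less.prems(2) BU by blast
      moreover have "\<sigma> ` B \<notin> Ob"
      proof
        assume "\<sigma> ` B \<in> Ob"
        then have "\<sigma> ` B \<in> (`) \<sigma> ` Ob" using pOb by simp
        then obtain B' where B': "B' \<in> Ob" "\<sigma> ` B = \<sigma> ` B'" by blast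
        have "B \<in> A" "B' \<in> A" using BU B'(1) ObA less.prems(1) by blast+
        then have "B = B'" using inj_onD[OF injA B'(2)] by blast
        then show False using BO B'(1) by blast
      qed
      ultimately show "\<sigma> ` B \<in> V" by (simp add: V_def)
    qed
    have VA: "V \<subseteq> A" using less.prems(1) by (auto simp: V_def)
    have "card V < card U"
    proof (rule psubset_card_mono[OF fU])
      show "V \<subset> U" using B0 orb_self[of B0 \<sigma>] by (auto simp: V_def Ob_def)
    qed
    then have nV: "XU ds \<sigma> V \<noteq> 0" using less.hyps VA iV by blast
    have nO: "XU ds \<sigma> Ob \<noteq> 0" using XU_orbit_nz[OF s B0A P] by (simp add: Ob_def)
    have UOV: "U = Ob \<union> V" using ObU by (auto simp: V_def)
    have "XU ds \<sigma> U = XU ds \<sigma> Ob * XU ds \<sigma> V"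
      unfolding UOV by (rule XU_split[OF part s ObA VA _ iOb iV]) (auto simp: V_def)
    then show ?thesis using nO nV by simp
  qed
qed

end

theorem lemma2p3:
  fixes d n :: nat and A :: "nat set set" and ds :: "((nat \<Rightarrow>\<^sub>0 int) \<times> bool) list"
  assumes "partition_on {1..n} A"
    and "\<forall>(w, p)\<in>set ds. Poly_Mapping.keys w \<subseteq> {..<d}"
    and "classD ds \<noteq> 0"
  shows "unit_loc d (Sym_part n A) (tensor_class n A ds)"
proof (rule unit_loc_crit)
  show "isc d (Sym_part n A) (tensor_class n A ds)"
    unfolding tensor_class_def by (rule isc_transport[OF tens_graded_rep[OF assms(1,2)]])
  show "finite (Sym_part n A)" by (rule G_fin[OF assms(1)])
  show "id \<in> Sym_part n A" by (rule G_id[OF assms(1)])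
  fix g assume g: "g \<in> Sym_part n A"
  show "tensor_class n A ds g \<in> K_T d" by (rule x_K_T[OF assms(1) g assms(2)])
  have "XU ds g A \<noteq> 0"
    by (rule XU_nz[OF assms(1) g assms(3)]) (use G_blk[OF assms(1) g] in auto)
  then show "tensor_class n A ds g \<noteq> 0" using tc_XU[OF assms(1) g] by simp
qed


end
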